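(* For any maximal isotropic subspace $\mathcal{M}\subset{}^d\mathcal{K}$, \begin{equation*} \langle\varphi, -\Delta(\mathcal{M},\underline{a})\psi\rangle_{\mathcal{H}} =\sum_{j\in\mathcal{E}\cup\mathcal{I}} \langle\varphi^\prime,\psi^\prime\rangle_{\mathcal{H}_j} +\langle[\varphi], Q_{\mathcal{M}}[\psi]\rangle_{{}^d\mathcal{K}} \end{equation*} holds for all $\varphi,\psi\in\operatorname{Dom}\Delta(\mathcal{M},\underline{a})$, where \begin{equation*} Q_{\mathcal{M}} = - \begin{pmatrix} -B^\dagger \\ A^\dagger \end{pmatrix} (A A^\dagger + B B^\dagger)^{-1} A B^\dagger (A A^\dagger + B B^\dagger)^{-1} (-B,A) \end{equation*} for any $(A,B)$ with $\mathcal{M}=\mathcal{M}(A,B)$.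
   Context: Let $\mathcal{G}=(V,\mathcal{I},\mathcal{E},\partial)$ be a finite connected graph with internal edges $\mathcal{I}$ (identified with intervals $I_i=[0,a_i]$, $a_i>0$) and external edges $\mathcal{E}$ (identified with $I_e=[0,\infty)$); $\underline{a}=\{a_i\}_{i\in\mathcal{I}}$. Let $\mathcal{H}=\bigoplus_{j\in\mathcal{E}\cup\mathcal{I}}\mathcal{H}_j$ with $\mathcal{H}_j=L^2(I_j)$. Let $\mathcal{K}=\mathcal{K}_{\mathcal{E}}\oplus\mathcal{K}_{\mathcal{I}}^{(-)}\oplus\mathcal{K}_{\mathcal{I}}^{(+)}$ with $\mathcal{K}_{\mathcal{E}}\cong\mathbb{C}^{|\mathcal{E}|}$, $\mathcal{K}_{\mathcal{I}}^{(\pm)}\cong\mathbb{C}^{|\mathcal{I}|}$, and ${}^d\mathcal{K}=\mathcal{K}\oplus\mathcal{K}$ with the symplectic form $\omega(\chi,\chi')=\langle\chi,J\chi'\rangle$, $J=\begin{pmatrix}0&\mathbb{I}\\-\mathbb{I}&0\end{pmatrix}$. For $\psi$ with $\psi_j,\psi_j'$ absolutely continuous and $\psi_j''\in L^2$, set $[\psi]=\underline{\psi}\oplus\underline{\psi}'\in{}^d\mathcal{K}$, where $\underline{\psi}=(\{\psi_e(0)\}_{e\in\mathcal{E}},\{\psi_i(0)\}_{i\in\mathcal{I}},\{\psi_i(a_i)\}_{i\in\mathcal{I}})$ and $\underline{\psi}'=(\{\psi_e'(0)\}_{e\in\mathcal{E}},\{\psi_i'(0)\}_{i\in\mathcal{I}},\{-\psi_i'(a_i)\}_{i\in\mathcal{I}})$.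 A maximal isotropic subspace $\mathcal{M}\subset{}^d\mathcal{K}$ can be written as $\mathcal{M}(A,B)=\operatorname{Ker}(A,B)$ with linear maps $A,B:\mathcal{K}\to\mathcal{K}$ such that $(A,B)$ has maximal rank $|\mathcal{E}|+2|\mathcal{I}|$ and $AB^\dagger$ is self-adjoint. $\Delta(\mathcal{M},\underline{a})$ is the self-adjoint operator acting as $(\Delta\psi)_j=\psi_j''$ on the domain of such $\psi$ with $[\psi]\in\mathcal{M}$ (i.e. $A\underline{\psi}+B\underline{\psi}'=0$). The operator $Q_{\mathcal{M}}$ equals $P_{\mathcal{M}}QP_{\mathcal{M}}$ with $Q=\begin{pmatrix}0&\mathbb{I}\\0&0\end{pmatrix}$ and $P_{\mathcal{M}}$ the orthogonal projection onto $\mathcal{M}$ in ${}^d\mathcal{K}$; it depends only on $\mathcal{M}$. Block matrices are with respect to ${}^d\mathcal{K}=\mathcal{K}\oplus\mathcal{K}$. *)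

theory Defs
  imports "HOL-Analysis.Analysis" "Jordan_Normal_Form.Gauss_Jordan_Elimination"
          "Jordan_Normal_Form.Schur_Decomposition"
begin

no_notation Finite_Cartesian_Product.vec_nth (infixl "$" 90)

definition hblock :: "complex mat \<Rightarrow> complex mat \<Rightarrow> complex mat" where
  "hblock X Y = mat (dim_row X) (dim_col X + dim_col Y)
     (\<lambda>(i,j). if j < dim_col X then X $$ (i,j) else Y $$ (i, j - dim_col X))"

definition vblock :: "complex mat \<Rightarrow> complex mat \<Rightarrow> complex mat" where
  "vblock X Y = mat (dim_row X + dim_row Y) (dim_col X)
     (\<lambda>(i,j). if i < dim_row X then X $$ (i,j) else Y $$ (i - dim_row X, j))"

definition kinner :: "complex vec \<Rightarrow> complex vec \<Rightarrow> complex" where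
  "kinner x y = (\<Sum>k<dim_vec x. cnj (x $ k) * y $ k)"

definition MAB :: "nat \<Rightarrow> complex mat \<Rightarrow> complex mat \<Rightarrow> complex vec set" where
  "MAB n A B = {w \<in> carrier_vec (2*n). hblock A B *\<^sub>v w = 0\<^sub>v n}"

definition maximal_rank :: "nat \<Rightarrow> complex mat \<Rightarrow> complex mat \<Rightarrow> bool" where
  "maximal_rank n A B \<longleftrightarrow> (\<forall>z\<in>carrier_vec n. \<exists>w\<in>carrier_vec (2*n). hblock A B *\<^sub>v w = z)"

definition is_orth_proj :: "nat \<Rightarrow> complex vec set \<Rightarrow> complex mat \<Rightarrow> bool" where
  "is_orth_proj m S P \<longleftrightarrow> P \<in> carrier_mat m m \<and>
     (\<forall>w\<in>carrier_vec m. P *\<^sub>v w \<in> S \<and> (\<forall>\<mu>\<in>S. kinner \<mu> (w - P *\<^sub>v w) = 0))"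

definition Qmat :: "nat \<Rightarrow> complex mat" where
  "Qmat n = four_block_mat (0\<^sub>m n n) (1\<^sub>m n) (0\<^sub>m n n) (0\<^sub>m n n)"

definition QAB :: "complex mat \<Rightarrow> complex mat \<Rightarrow> complex mat" where
  "QAB A B = (let R = the (mat_inverse (A * mat_adjoint A + B * mat_adjoint B)) in
     - (vblock (- mat_adjoint B) (mat_adjoint A) * R * (A * mat_adjoint B) * R * hblock (- B) A))"

section \<open>The metric graph: edges j < nE are external ([0,oo)), edges nE + i (i < nI) are
  internal ([0, a i])\<close>

definition edge_int :: "nat \<Rightarrow> (nat \<Rightarrow> real) \<Rightarrow> nat \<Rightarrow> real set" where
  "edge_int nE a j = (if j < nE then {0..} else {0..a (j - nE)})"

definition square_integrable :: "real set \<Rightarrow> (real \<Rightarrow> complex) \<Rightarrow> bool" where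
  "square_integrable I f \<longleftrightarrow> set_borel_measurable lborel I f \<and>
     set_integrable lborel I (\<lambda>x. (cmod (f x))\<^sup>2)"

definition ac_with_deriv :: "real set \<Rightarrow> (real \<Rightarrow> complex) \<Rightarrow> (real \<Rightarrow> complex) \<Rightarrow> bool" where
  "ac_with_deriv I f g \<longleftrightarrow> (\<forall>x\<in>I. set_integrable lborel {0..x} g \<and>
      f x = f 0 + (LINT t:{0..x}|lborel. g t))"

definition edge_H2 :: "real set \<Rightarrow> (real \<Rightarrow> complex) \<Rightarrow> (real \<Rightarrow> complex) \<Rightarrow> (real \<Rightarrow> complex) \<Rightarrow> bool" where
  "edge_H2 I f f1 f2 \<longleftrightarrow> square_integrable I f \<and> ac_with_deriv I f f1 \<and>
      ac_with_deriv I f1 f2 \<and> square_integrable I f2"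

text \<open>Boundary values [psi] = psi_bar (+) psi_bar' in dK = C^n + C^n, n = nE + 2 nI.
  Components: external edges at 0; internal edges at 0; internal edges at a_i
  (derivative with a minus sign).\<close>
definition bvals :: "nat \<Rightarrow> nat \<Rightarrow> (nat \<Rightarrow> real) \<Rightarrow> (nat \<Rightarrow> real \<Rightarrow> complex) \<Rightarrow> (nat \<Rightarrow> real \<Rightarrow> complex)
    \<Rightarrow> complex vec" where
  "bvals nE nI a f f1 = Matrix.vec (2 * (nE + 2 * nI)) (\<lambda>k.
     (let n = nE + 2 * nI in
      if k < n then
        (if k < nE + nI then f k 0 else f (k - nI) (a (k - nI - nE)))
      else let l = k - n in
        (if l < nE + nI then f1 l 0 else - f1 (l - nI) (a (l - nI - nE)))))"

definition in_dom :: "nat \<Rightarrow> nat \<Rightarrow> (nat \<Rightarrow> real) \<Rightarrow> complex mat \<Rightarrow> complex mat \<Rightarrow>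
    (nat \<Rightarrow> real \<Rightarrow> complex) \<Rightarrow> (nat \<Rightarrow> real \<Rightarrow> complex) \<Rightarrow> (nat \<Rightarrow> real \<Rightarrow> complex) \<Rightarrow> bool" where
  "in_dom nE nI a A B f f1 f2 \<longleftrightarrow>
     (\<forall>j < nE + nI. edge_H2 (edge_int nE a j) (f j) (f1 j) (f2 j)) \<and>
     bvals nE nI a f f1 \<in> MAB (nE + 2 * nI) A B"

end

theory Submission
  imports Defs
begin

lemma D_sets: "{(t::real,s::real). s \<le> t} \<in> sets (lborel \<Otimes>\<^sub>M lborel)"
proof -
  have "{p \<in> space (lborel \<Otimes>\<^sub>M lborel). snd p \<le> (fst p::real)} \<in> sets (lborel \<Otimes>\<^sub>M lborel)"
    by measurable
  then show ?thesis by (simp add: space_pair_measure case_prod_beta')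
qed

lemma D2_sets: "{(t::real,s::real). t < s} \<in> sets (lborel \<Otimes>\<^sub>M lborel)"
proof -
  have "{p \<in> space (lborel \<Otimes>\<^sub>M lborel). fst p < (snd p::real)} \<in> sets (lborel \<Otimes>\<^sub>M lborel)"
    by measurable
  then show ?thesis by (simp add: space_pair_measure case_prod_beta')
qed

lemma K_int:
  fixes fI gI :: "real \<Rightarrow> complex"
  assumes "integrable lborel fI" "integrable lborel gI"
  shows "integrable (lborel \<Otimes>\<^sub>M lborel) (\<lambda>(t,s). fI t * gI s)"
proof (rule lborel_pair.Fubini_integrable)
  have [measurable]: "fI \<in> borel_measurable lborel" "gI \<in> borel_measurable lborel"
    using assms by (auto intro: borel_measurable_integrable)
  show "(\<lambda>(t,s). fI t * gI s) \<in> borel_measurable (lborel \<Otimes>\<^sub>M lborel)" by measurable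
  show "integrable lborel (\<lambda>x. LINT y|lborel. norm (case (x, y) of (t, s) \<Rightarrow> fI t * gI s))"
    using assms by (simp add: norm_mult)
  show "AE x in lborel. integrable lborel (\<lambda>y. case (x, y) of (t, s) \<Rightarrow> fI t * gI s)"
    using assms by simp
qed

lemma prod_rule:
  fixes F f G g :: "real \<Rightarrow> complex" and x :: real
  assumes x: "0 \<le> x"
  and fint: "set_integrable lborel {0..x} f" and gint: "set_integrable lborel {0..x} g"
  and Fe: "\<forall>t\<in>{0..x}. F t = F 0 + (LINT s:{0..t}|lborel. f s)"
  and Ge: "\<forall>t\<in>{0..x}. G t = G 0 + (LINT s:{0..t}|lborel. g s)"
  shows "set_integrable lborel {0..x} (\<lambda>t. f t * G t)"
    "set_integrable lborel {0..x} (\<lambda>t. F t * g t)"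
    "(LINT t:{0..x}|lborel. f t * G t) + (LINT t:{0..x}|lborel. F t * g t) = F x * G x - F 0 * G 0"
proof -
  define I where "I = {0..x}"
  define fI where "fI t = indicator I t *\<^sub>R f t" for t
  define gI where "gI t = indicator I t *\<^sub>R g t" for t
  have fi: "integrable lborel fI" using fint unfolding fI_def I_def set_integrable_def .
  have gi: "integrable lborel gI" using gint unfolding gI_def I_def set_integrable_def .
  have [measurable]: "fI \<in> borel_measurable lborel" "gI \<in> borel_measurable lborel"
    using fi gi by (auto intro: borel_measurable_integrable)
  define K where "K = (\<lambda>(t::real,s::real). fI t * gI s)"
  have Ki: "integrable (lborel \<Otimes>\<^sub>M lborel) K" unfolding K_def by (rule K_int[OF fi gi])
  define K1 where "K1 t s = indicator {(t::real,s::real). s \<le> t} (t,s) *\<^sub>R K (t,s)" for t s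
  define K2 where "K2 t s = indicator {(t::real,s::real). t < s} (t,s) *\<^sub>R K (t,s)" for t s
  have K1i: "integrable (lborel \<Otimes>\<^sub>M lborel) (case_prod K1)"
  proof -
    have "(\<lambda>(t,s). K1 t s) = (\<lambda>p. indicator {(t::real,s::real). s \<le> t} p *\<^sub>R K p)"
      by (auto simp: K1_def fun_eq_iff)
    then show ?thesis using integrable_mult_indicator[OF D_sets Ki] by simp
  qed
  have K2i: "integrable (lborel \<Otimes>\<^sub>M lborel) (case_prod K2)"
  proof -
    have "(\<lambda>(t,s). K2 t s) = (\<lambda>p. indicator {(t::real,s::real). t < s} p *\<^sub>R K p)"
      by (auto simp: K2_def fun_eq_iff)
    then show ?thesis using integrable_mult_indicator[OF D2_sets Ki] by simp
  qed
  have KK: "case_prod K1 p + case_prod K2 p = K p" for p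
    by (cases p) (auto simp: K1_def K2_def indicator_def)
  have intK: "integral\<^sup>L (lborel \<Otimes>\<^sub>M lborel) K = integral\<^sup>L lborel fI * integral\<^sup>L lborel gI"
  proof -
    have "integral\<^sup>L (lborel \<Otimes>\<^sub>M lborel) K = (\<integral>t. (\<integral>s. fI t * gI s \<partial>lborel) \<partial>lborel)"
      using lborel_pair.integral_fst[of "\<lambda>t s. fI t * gI s"] Ki unfolding K_def by simp
    also have "\<dots> = integral\<^sup>L lborel fI * integral\<^sup>L lborel gI" by simp
    finally show ?thesis .
  qed
  have intK12: "integral\<^sup>L (lborel \<Otimes>\<^sub>M lborel) (case_prod K1) + integral\<^sup>L (lborel \<Otimes>\<^sub>M lborel) (case_prod K2)
      = integral\<^sup>L (lborel \<Otimes>\<^sub>M lborel) K"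
    using K1i K2i KK by (subst Bochner_Integration.integral_add[symmetric]) auto
  have F1: "integrable lborel (\<lambda>t. \<integral>s. K1 t s \<partial>lborel)"
    and F1e: "(\<integral>t. (\<integral>s. K1 t s \<partial>lborel) \<partial>lborel) = integral\<^sup>L (lborel \<Otimes>\<^sub>M lborel) (case_prod K1)"
    using lborel_pair.integrable_fst[OF K1i] lborel_pair.integral_fst[OF K1i] by auto
  have F2: "integrable lborel (\<lambda>s. \<integral>t. K2 t s \<partial>lborel)"
    and F2e: "(\<integral>s. (\<integral>t. K2 t s \<partial>lborel) \<partial>lborel) = integral\<^sup>L (lborel \<Otimes>\<^sub>M lborel) (case_prod K2)"
    using lborel_pair.integrable_snd[OF K2i] lborel_pair.integral_snd[OF K2i] by auto
  have p1: "indicator I t *\<^sub>R (f t * G t) = G 0 * fI t + (\<integral>s. K1 t s \<partial>lborel)" for t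
  proof (cases "t \<in> I")
    case True
    have "(\<integral>s. K1 t s \<partial>lborel) = fI t * (\<integral>s. indicator {0..t} s *\<^sub>R g s \<partial>lborel)"
    proof -
      have "K1 t s = fI t * (indicator {0..t} s *\<^sub>R g s)" for s
        using True by (auto simp: K1_def K_def gI_def I_def indicator_def)
      then have "K1 t = (\<lambda>s. fI t * (indicator {0..t} s *\<^sub>R g s))" by (simp add: fun_eq_iff)
      then show ?thesis by (simp only: integral_mult_right_zero)
    qed
    also have "(\<integral>s. indicator {0..t} s *\<^sub>R g s \<partial>lborel) = G t - G 0"
      using bspec[OF Ge, of t] True unfolding I_def set_lebesgue_integral_def by simp
    finally show ?thesis using True by (simp add: fI_def algebra_simps)
  next
    case False
    then show ?thesis by (simp add: K1_def K_def fI_def)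
  qed
  have p2: "indicator I s *\<^sub>R (F s * g s) = F 0 * gI s + (\<integral>t. K2 t s \<partial>lborel)" for s
  proof (cases "s \<in> I")
    case True
    have "(\<integral>t. K2 t s \<partial>lborel) = (\<integral>t. indicator {0..<s} t *\<^sub>R fI t \<partial>lborel) * g s"
    proof -
      have "K2 t s = (indicator {0..<s} t *\<^sub>R fI t) * g s" for t
        using True by (auto simp: K2_def K_def gI_def fI_def I_def indicator_def)
      then have "(\<lambda>t. K2 t s) = (\<lambda>t. (indicator {0..<s} t *\<^sub>R fI t) * g s)" by (simp add: fun_eq_iff)
      then show ?thesis by (simp only: integral_mult_left_zero)
    qed
    also have "(\<integral>t. indicator {0..<s} t *\<^sub>R fI t \<partial>lborel) = (\<integral>t. indicator {0..s} t *\<^sub>R fI t \<partial>lborel)"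
      by (rule integral_cong_AE) (auto intro!: eventually_mono[OF AE_lborel_singleton[of s]] simp: indicator_def)
    also have "(\<integral>t. indicator {0..s} t *\<^sub>R fI t \<partial>lborel) = (\<integral>t. indicator {0..s} t *\<^sub>R f t \<partial>lborel)"
      using True by (intro Bochner_Integration.integral_cong) (auto simp: fI_def I_def indicator_def)
    also have "\<dots> = F s - F 0"
      using bspec[OF Fe, of s] True unfolding I_def set_lebesgue_integral_def by simp
    finally show ?thesis using True by (simp add: gI_def algebra_simps)
  next
    case False
    then show ?thesis by (simp add: K2_def K_def gI_def)
  qed
  have i1: "integrable lborel (\<lambda>t. indicator I t *\<^sub>R (f t * G t))"
    unfolding p1 using fi F1 by auto
  have i2: "integrable lborel (\<lambda>s. indicator I s *\<^sub>R (F s * g s))"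
    unfolding p2 using gi F2 by auto
  show "set_integrable lborel {0..x} (\<lambda>t. f t * G t)"
    using i1 unfolding set_integrable_def I_def .
  show "set_integrable lborel {0..x} (\<lambda>t. F t * g t)"
    using i2 unfolding set_integrable_def I_def .
  have e1: "(LINT t:{0..x}|lborel. f t * G t) = G 0 * integral\<^sup>L lborel fI + integral\<^sup>L (lborel \<Otimes>\<^sub>M lborel) (case_prod K1)"
    unfolding set_lebesgue_integral_def I_def[symmetric] p1 F1e[symmetric]
    using fi F1 by simp
  have e2: "(LINT t:{0..x}|lborel. F t * g t) = F 0 * integral\<^sup>L lborel gI + integral\<^sup>L (lborel \<Otimes>\<^sub>M lborel) (case_prod K2)"
    unfolding set_lebesgue_integral_def I_def[symmetric] p2 F2e[symmetric]
    using gi F2 by simp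
  have fx: "integral\<^sup>L lborel fI = F x - F 0"
    using bspec[OF Fe, of x] x unfolding fI_def I_def set_lebesgue_integral_def by simp
  have gx: "integral\<^sup>L lborel gI = G x - G 0"
    using bspec[OF Ge, of x] x unfolding gI_def I_def set_lebesgue_integral_def by simp
  show "(LINT t:{0..x}|lborel. f t * G t) + (LINT t:{0..x}|lborel. F t * g t) = F x * G x - F 0 * G 0"
  proof -
    have h: "integral\<^sup>L (lborel \<Otimes>\<^sub>M lborel) (case_prod K1) = (F x - F 0) * (G x - G 0) - integral\<^sup>L (lborel \<Otimes>\<^sub>M lborel) (case_prod K2)"
      using intK12 intK fx gx by (simp add: eq_diff_eq)
    show ?thesis unfolding e1 e2 fx gx h by (simp add: algebra_simps)
  qed
qed

lemma borel_measurable_cnj' [measurable]: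
  fixes f :: "'a \<Rightarrow> complex"
  shows "f \<in> borel_measurable M \<Longrightarrow> (\<lambda>x. cnj (f x)) \<in> borel_measurable M"
  by (rule borel_measurable_continuous_on[where f=cnj]) (auto intro: continuous_intros)

lemma no_pos_tail:
  fixes h :: "real \<Rightarrow> 'a::{banach,second_countable_topology}"
  assumes hi: "set_integrable lborel {0..} h" and c: "c > 0" and tl: "\<forall>t\<ge>R0. c \<le> norm (h t)"
  shows False
proof -
  define R1 where "R1 = max R0 0"
  have ni: "set_integrable lborel {0..} (\<lambda>t. norm (h t))" using set_integrable_norm[OF hi] .
  define T where "T = (LINT t:{0..}|lborel. norm (h t))"
  define R where "R = R1 + T / c + 1"
  have TR: "T \<ge> 0" unfolding T_def set_lebesgue_integral_def by (rule integral_nonneg_AE) auto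
  have R1R: "R1 \<le> R" using TR c by (simp add: R_def)
  have "(LINT t:{R1..R}|lborel. c) \<le> (LINT t:{0..}|lborel. norm (h t))"
    unfolding set_lebesgue_integral_def
  proof (rule integral_mono)
    show "integrable lborel (\<lambda>x. indicat_real {R1..R} x *\<^sub>R c)"
      by (intro integrable_scaleR_left integrable_real_indicator) (auto simp: R1R)
    show "integrable lborel (\<lambda>x. indicat_real {0..} x *\<^sub>R norm (h x))"
      using ni unfolding set_integrable_def .
    fix t show "indicat_real {R1..R} t *\<^sub>R c \<le> indicat_real {0..} t *\<^sub>R norm (h t)"
      using tl c by (auto simp: indicator_def R1_def)
  qed
  moreover have "(LINT t:{R1..R}|lborel. c) = (R - R1) * c"
    using R1R by (subst set_integral_const) auto
  moreover have "(R - R1) * c = T + c" using c by (simp add: R_def field_simps)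
  ultimately show False using c unfolding T_def by simp
qed

lemma lim_zero:
  fixes h :: "real \<Rightarrow> 'a::{banach,second_countable_topology}"
  assumes hi: "set_integrable lborel {0..} h" and lim: "(h \<longlongrightarrow> l) at_top"
  shows "l = 0"
proof (rule ccontr)
  assume l: "l \<noteq> 0"
  have "eventually (\<lambda>t. dist (h t) l < norm l / 2) at_top"
    using tendstoD[OF lim, of "norm l / 2"] l by simp
  then obtain R0 where R0: "\<forall>t\<ge>R0. dist (h t) l < norm l / 2"
    by (auto simp: eventually_at_top_linorder)
  have "\<forall>t\<ge>R0. norm l / 2 \<le> norm (h t)"
  proof (intro allI impI)
    fix t assume "t \<ge> R0"
    then have "dist (h t) l < norm l / 2" using R0 by auto
    moreover have "norm l \<le> norm (h t) + dist (h t) l"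
      by (metis dist_commute dist_norm norm_triangle_sub add.commute)
    ultimately show "norm l / 2 \<le> norm (h t)" by simp
  qed
  then show False using no_pos_tail[OF hi, of "norm l / 2" R0] l by simp
qed

lemma sq_prod_int:
  fixes u v :: "real \<Rightarrow> complex"
  assumes u: "square_integrable I u" and v: "square_integrable I v"
  shows "set_integrable lborel I (\<lambda>x. cnj (u x) * v x)"
proof (rule set_integrable_bound)
  show "set_integrable lborel I (\<lambda>x. (cmod (u x))\<^sup>2 + (cmod (v x))\<^sup>2)"
    using u v unfolding square_integrable_def by (intro set_integral_add) auto
  have [measurable]: "(\<lambda>x. indicator I x *\<^sub>R u x) \<in> borel_measurable lborel"
    "(\<lambda>x. indicator I x *\<^sub>R v x) \<in> borel_measurable lborel"
    using u v unfolding square_integrable_def set_borel_measurable_def by auto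
  have eq: "(\<lambda>x. indicator I x *\<^sub>R (cnj (u x) * v x)) = (\<lambda>x. cnj (indicator I x *\<^sub>R u x) * (indicator I x *\<^sub>R v x))"
    by (auto simp: indicator_def fun_eq_iff)
  have "(\<lambda>x. cnj (indicator I x *\<^sub>R u x) * (indicator I x *\<^sub>R v x)) \<in> borel_measurable lborel"
    by measurable
  then show "set_borel_measurable lborel I (\<lambda>x. cnj (u x) * v x)"
    unfolding set_borel_measurable_def eq .
  show "AE x in lborel. x \<in> I \<longrightarrow> norm (cnj (u x) * v x) \<le> norm ((cmod (u x))\<^sup>2 + (cmod (v x))\<^sup>2)"
  proof (intro AE_I2 impI)
    fix x
    show "norm (cnj (u x) * v x) \<le> norm ((cmod (u x))\<^sup>2 + (cmod (v x))\<^sup>2)"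
    proof -
      have "norm (cnj (u x) * v x) = cmod (u x) * cmod (v x)" by (simp add: norm_mult)
      also have "\<dots> \<le> (cmod (u x))\<^sup>2 + (cmod (v x))\<^sup>2"
        using sum_squares_bound[of "cmod (u x)" "cmod (v x)"]
          mult_nonneg_nonneg[OF norm_ge_zero norm_ge_zero, of "u x" "v x"] by linarith
      also have "\<dots> = norm ((cmod (u x))\<^sup>2 + (cmod (v x))\<^sup>2)" by simp
      finally show ?thesis .
    qed
  qed
qed

lemma ac_cnj:
  assumes "ac_with_deriv I f g"
  shows "ac_with_deriv I (\<lambda>x. cnj (f x)) (\<lambda>x. cnj (g x))"
proof -
  have eq: "(\<lambda>t. indicator A t *\<^sub>R cnj (g t)) = (\<lambda>t. cnj (indicator A t *\<^sub>R g t))" for A :: "real set"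
    by (simp add: fun_eq_iff scaleR_conv_of_real)
  show ?thesis unfolding ac_with_deriv_def
  proof
    fix x assume x: "x \<in> I"
    have i: "integrable lborel (\<lambda>t. indicator {0..x} t *\<^sub>R g t)" and e: "f x = f 0 + (LINT t:{0..x}|lborel. g t)"
      using assms x unfolding ac_with_deriv_def set_integrable_def by auto
    have "integrable lborel (\<lambda>t. cnj (indicator {0..x} t *\<^sub>R g t))" using integrable_cnj[OF i] .
    then show "set_integrable lborel {0..x} (\<lambda>x. cnj (g x)) \<and>
      cnj (f x) = cnj (f 0) + (LINT t:{0..x}|lborel. cnj (g t))"
      using e unfolding set_integrable_def set_lebesgue_integral_def eq
      by (simp only: Bochner_Integration.integral_cnj complex_cnj_add simp_thms)
  qed
qed

lemma edge_ibp:
  fixes \<phi> \<phi>1 \<psi>1 \<psi>2 :: "real \<Rightarrow> complex"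
  assumes R: "0 \<le> R" "{0..R} \<subseteq> I"
   and a1: "ac_with_deriv I \<phi> \<phi>1" and a2: "ac_with_deriv I \<psi>1 \<psi>2"
  shows "set_integrable lborel {0..R} (\<lambda>t. cnj (\<phi>1 t) * \<psi>1 t)"
    "set_integrable lborel {0..R} (\<lambda>t. cnj (\<phi> t) * \<psi>2 t)"
    "(LINT t:{0..R}|lborel. cnj (\<phi>1 t) * \<psi>1 t) + (LINT t:{0..R}|lborel. cnj (\<phi> t) * \<psi>2 t)
      = cnj (\<phi> R) * \<psi>1 R - cnj (\<phi> 0) * \<psi>1 0"
proof -
  have c: "ac_with_deriv I (\<lambda>x. cnj (\<phi> x)) (\<lambda>x. cnj (\<phi>1 x))" by (rule ac_cnj[OF a1])
  have RI: "R \<in> I" using R by auto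
  have p1: "set_integrable lborel {0..R} (\<lambda>x. cnj (\<phi>1 x))" using c RI unfolding ac_with_deriv_def by auto
  have p2: "set_integrable lborel {0..R} \<psi>2" using a2 RI unfolding ac_with_deriv_def by auto
  have p3: "\<forall>t\<in>{0..R}. cnj (\<phi> t) = cnj (\<phi> 0) + (LINT s:{0..t}|lborel. cnj (\<phi>1 s))"
    using c R unfolding ac_with_deriv_def by blast
  have p4: "\<forall>t\<in>{0..R}. \<psi>1 t = \<psi>1 0 + (LINT s:{0..t}|lborel. \<psi>2 s)"
    using a2 R unfolding ac_with_deriv_def by blast
  note P = prod_rule[OF R(1) p1 p2 p3 p4]
  show "set_integrable lborel {0..R} (\<lambda>t. cnj (\<phi>1 t) * \<psi>1 t)"
    "set_integrable lborel {0..R} (\<lambda>t. cnj (\<phi> t) * \<psi>2 t)"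
    "(LINT t:{0..R}|lborel. cnj (\<phi>1 t) * \<psi>1 t) + (LINT t:{0..R}|lborel. cnj (\<phi> t) * \<psi>2 t)
      = cnj (\<phi> R) * \<psi>1 R - cnj (\<phi> 0) * \<psi>1 0"
    using P by auto
qed

lemma int_edge:
  fixes \<phi> \<phi>1 \<phi>2 \<psi> \<psi>1 \<psi>2 :: "real \<Rightarrow> complex"
  assumes a: "0 \<le> a" and H1: "edge_H2 {0..a} \<phi> \<phi>1 \<phi>2" and H2: "edge_H2 {0..a} \<psi> \<psi>1 \<psi>2"
  shows "(LINT x:{0..a}|lborel. cnj (\<phi> x) * (- \<psi>2 x))
     = (LINT x:{0..a}|lborel. cnj (\<phi>1 x) * \<psi>1 x) + (cnj (\<phi> 0) * \<psi>1 0 - cnj (\<phi> a) * \<psi>1 a)"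
proof -
  note E = edge_ibp[OF a order_refl, of \<phi> \<phi>1 \<psi>1 \<psi>2]
  have E1: "(LINT t:{0..a}|lborel. cnj (\<phi>1 t) * \<psi>1 t) + (LINT t:{0..a}|lborel. cnj (\<phi> t) * \<psi>2 t)
      = cnj (\<phi> a) * \<psi>1 a - cnj (\<phi> 0) * \<psi>1 0"
    using E H1 H2 unfolding edge_H2_def by blast
  have "(LINT x:{0..a}|lborel. cnj (\<phi> x) * (- \<psi>2 x)) = - (LINT x:{0..a}|lborel. cnj (\<phi> x) * \<psi>2 x)"
    by (simp add: set_integral_uminus[symmetric] set_lebesgue_integral_def)
  then show ?thesis using E1 by (simp add: algebra_simps eq_diff_eq)
qed

lemma ind_lim:
  fixes h :: "real \<Rightarrow> 'a::real_normed_vector"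
  shows "(\<lambda>n. indicator {0..real n} x *\<^sub>R h x) \<longlonglongrightarrow> indicator {0..} x *\<^sub>R h x"
proof (rule tendsto_eventually)
  show "\<forall>\<^sub>F n in sequentially. indicator {0..real n} x *\<^sub>R h x = indicator {0..} x *\<^sub>R h x"
    unfolding eventually_sequentially
  proof (intro exI allI impI)
    fix n assume "nat \<lceil>x\<rceil> \<le> n"
    then have "x \<le> real n" by linarith
    then show "indicator {0..real n} x *\<^sub>R h x = indicator {0..} x *\<^sub>R h x"
      by (auto simp: indicator_def)
  qed
qed

lemma tail_norm_bound:
  fixes h :: "real \<Rightarrow> 'a::{banach,second_countable_topology}"
  assumes hi: "set_integrable lborel {0..} h" and R: "0 \<le> R"
  shows "norm (LINT t:{0..R}|lborel. h t) \<le> (LINT t:{0..}|lborel. norm (h t))"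
proof -
  have hR: "set_integrable lborel {0..R} h" by (rule set_integrable_subset[OF hi]) auto
  have "norm (LINT t:{0..R}|lborel. h t) \<le> (LINT t:{0..R}|lborel. norm (h t))"
    by (rule set_integral_norm_bound[OF hR])
  also have "\<dots> \<le> (LINT t:{0..}|lborel. norm (h t))"
    unfolding set_lebesgue_integral_def
  proof (rule integral_mono)
    show "integrable lborel (\<lambda>x. indicat_real {0..R} x *\<^sub>R norm (h x))"
      using set_integrable_norm[OF hR] unfolding set_integrable_def .
    show "integrable lborel (\<lambda>x. indicat_real {0..} x *\<^sub>R norm (h x))"
      using set_integrable_norm[OF hi] unfolding set_integrable_def .
    fix t show "indicat_real {0..R} t *\<^sub>R norm (h t) \<le> indicat_real {0..} t *\<^sub>R norm (h t)"
      by (auto simp: indicator_def)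
  qed
  finally show ?thesis .
qed

lemma deriv_L2:
  fixes \<psi> \<psi>1 \<psi>2 :: "real \<Rightarrow> complex"
  assumes H: "edge_H2 {0..} \<psi> \<psi>1 \<psi>2"
  shows "square_integrable {0..} \<psi>1"
proof -
  have sq0: "square_integrable {0..} \<psi>" and a0: "ac_with_deriv {0..} \<psi> \<psi>1"
    and a1: "ac_with_deriv {0..} \<psi>1 \<psi>2" and sq2: "square_integrable {0..} \<psi>2"
    using H unfolding edge_H2_def by auto
  have si1: "set_integrable lborel {0..R} \<psi>1" if "0 \<le> R" for R
    using a0 that unfolding ac_with_deriv_def by auto
  have meas: "set_borel_measurable lborel {0..} \<psi>1"
    unfolding set_borel_measurable_def
  proof (rule borel_measurable_LIMSEQ_metric[where f = "\<lambda>n x. indicator {0..real n} x *\<^sub>R \<psi>1 x"])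
    show "(\<lambda>x. indicat_real {0..real i} x *\<^sub>R \<psi>1 x) \<in> borel_measurable lborel" for i
      using si1[of "real i"] unfolding set_integrable_def by (auto intro: borel_measurable_integrable)
    show "(\<lambda>i. indicat_real {0..real i} x *\<^sub>R \<psi>1 x) \<longlonglongrightarrow> indicat_real {0..} x *\<^sub>R \<psi>1 x" for x
      by (rule ind_lim)
  qed
  define \<Phi> where "\<Phi> R = (LINT x:{0..R}|lborel. (cmod (\<psi>1 x))\<^sup>2)" for R
  have cn: "cnj z * z = complex_of_real ((cmod z)\<^sup>2)" for z :: complex
    by (subst complex_norm_square) (rule mult.commute)
  have id1: "set_integrable lborel {0..R} (\<lambda>x. (cmod (\<psi>1 x))\<^sup>2) \<and>
      complex_of_real (\<Phi> R) + (LINT t:{0..R}|lborel. cnj (\<psi> t) * \<psi>2 t) = cnj (\<psi> R) * \<psi>1 R - cnj (\<psi> 0) * \<psi>1 0"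
    if R: "0 \<le> R" for R
  proof -
    have sub: "{0..R} \<subseteq> {0..}" by auto
    note E = edge_ibp[OF R sub a0 a1]
    have E': "set_integrable lborel {0..R} (\<lambda>t. complex_of_real ((cmod (\<psi>1 t))\<^sup>2))"
      "(LINT t:{0..R}|lborel. complex_of_real ((cmod (\<psi>1 t))\<^sup>2)) + (LINT t:{0..R}|lborel. cnj (\<psi> t) * \<psi>2 t)
      = cnj (\<psi> R) * \<psi>1 R - cnj (\<psi> 0) * \<psi>1 0"
      using E by (auto simp: cn)
    have "set_integrable lborel {0..R} (\<lambda>x. (cmod (\<psi>1 x))\<^sup>2)"
      using E'(1) unfolding set_integrable_def
      by (simp add: scaleR_conv_of_real complex_of_real_integrable_eq[symmetric])
    then show ?thesis using E'(2) unfolding \<Phi>_def set_integral_complex_of_real by simp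
  qed
  have Phi_mono: "\<Phi> R \<le> \<Phi> R'" if "0 \<le> R" "R \<le> R'" for R R'
    unfolding \<Phi>_def set_lebesgue_integral_def
  proof (rule integral_mono)
    show "integrable lborel (\<lambda>x. indicat_real {0..R} x *\<^sub>R (cmod (\<psi>1 x))\<^sup>2)"
      using id1[of R] that unfolding set_integrable_def by auto
    show "integrable lborel (\<lambda>x. indicat_real {0..R'} x *\<^sub>R (cmod (\<psi>1 x))\<^sup>2)"
      using id1[of R'] that unfolding set_integrable_def by auto
    fix t show "indicat_real {0..R} t *\<^sub>R (cmod (\<psi>1 t))\<^sup>2 \<le> indicat_real {0..R'} t *\<^sub>R (cmod (\<psi>1 t))\<^sup>2"
      using that by (auto simp: indicator_def)
  qed
  have i02: "set_integrable lborel {0..} (\<lambda>t. cnj (\<psi> t) * \<psi>2 t)" by (rule sq_prod_int[OF sq0 sq2])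
  define C where "C = (LINT t:{0..}|lborel. norm (cnj (\<psi> t) * \<psi>2 t))"
  have Cb: "cmod (LINT t:{0..R}|lborel. cnj (\<psi> t) * \<psi>2 t) \<le> C" if "0 \<le> R" for R
    unfolding C_def by (rule tail_norm_bound[OF i02 that])
  show ?thesis
  proof (rule ccontr)
    assume nsq: "\<not> square_integrable {0..} \<psi>1"
    have nbdd: "\<not> bdd_above (range (\<lambda>n. \<Phi> (real n)))"
    proof
      assume bdd: "bdd_above (range (\<lambda>n. \<Phi> (real n)))"
      have "integrable lborel (\<lambda>x. indicator {0..} x *\<^sub>R (cmod (\<psi>1 x))\<^sup>2)"
      proof (rule integrable_monotone_convergence[where f = "\<lambda>n x. indicator {0..real n} x *\<^sub>R (cmod (\<psi>1 x))\<^sup>2"])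
        show "integrable lborel (\<lambda>x. indicator {0..real i} x *\<^sub>R (cmod (\<psi>1 x))\<^sup>2)" for i
          using id1[of "real i"] unfolding set_integrable_def by auto
        show "AE x in lborel. mono (\<lambda>n. indicator {0..real n} x *\<^sub>R (cmod (\<psi>1 x))\<^sup>2)"
          by (intro AE_I2) (auto simp: mono_def indicator_def)
        show "AE x in lborel. (\<lambda>i. indicator {0..real i} x *\<^sub>R (cmod (\<psi>1 x))\<^sup>2) \<longlonglongrightarrow> indicator {0..} x *\<^sub>R (cmod (\<psi>1 x))\<^sup>2"
          by (intro AE_I2 ind_lim)
        have "(\<lambda>n. \<Phi> (real n)) \<longlonglongrightarrow> (SUP n. \<Phi> (real n))"
          by (rule LIMSEQ_incseq_SUP[OF bdd]) (auto simp: incseq_def intro!: Phi_mono)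
        then show "(\<lambda>i. integral\<^sup>L lborel (\<lambda>x. indicator {0..real i} x *\<^sub>R (cmod (\<psi>1 x))\<^sup>2)) \<longlonglongrightarrow> (SUP n. \<Phi> (real n))"
          unfolding \<Phi>_def set_lebesgue_integral_def .
        have "(\<lambda>x. (norm (indicator {0..} x *\<^sub>R \<psi>1 x))\<^sup>2) \<in> borel_measurable lborel"
          using meas unfolding set_borel_measurable_def by measurable
        moreover have "(\<lambda>x. (norm (indicator {0..} x *\<^sub>R \<psi>1 x))\<^sup>2) = (\<lambda>x. indicator {0..} x *\<^sub>R (cmod (\<psi>1 x))\<^sup>2)"
          by (auto simp: indicator_def fun_eq_iff)
        ultimately show "(\<lambda>x. indicator {0..} x *\<^sub>R (cmod (\<psi>1 x))\<^sup>2) \<in> borel_measurable lborel" by simp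
      qed
      then show False using nsq meas unfolding square_integrable_def set_integrable_def by simp
    qed
    define b where "b = C + cmod (cnj (\<psi> 0) * \<psi>1 0) + 1"
    obtain n where n: "\<Phi> (real n) > b" using nbdd by (meson bdd_above.I2 linorder_not_le)
    define R1 where "R1 = real n"
    have R1: "0 \<le> R1" unfolding R1_def by simp
    define q where "q t = Re (cnj (\<psi> t) * \<psi>1 t)" for t
    have q1: "q R \<ge> 1" if "R \<ge> R1" for R
    proof -
      have R: "0 \<le> R" using that R1 by simp
      have "\<Phi> R \<ge> b" using Phi_mono[OF R1 that] n unfolding R1_def by simp
      moreover have "Re (cnj (\<psi> R) * \<psi>1 R) = \<Phi> R + Re (LINT t:{0..R}|lborel. cnj (\<psi> t) * \<psi>2 t) + Re (cnj (\<psi> 0) * \<psi>1 0)"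
        using arg_cong[OF conjunct2[OF id1[OF R]], of Re] by simp
      moreover have "Re (LINT t:{0..R}|lborel. cnj (\<psi> t) * \<psi>2 t) \<ge> - C"
        using Cb[OF R] abs_Re_le_cmod[of "LINT t:{0..R}|lborel. cnj (\<psi> t) * \<psi>2 t"] by linarith
      moreover have "Re (cnj (\<psi> 0) * \<psi>1 0) \<ge> - cmod (cnj (\<psi> 0) * \<psi>1 0)"
        using abs_Re_le_cmod[of "cnj (\<psi> 0) * \<psi>1 0"] by linarith
      ultimately show ?thesis unfolding q_def b_def by linarith
    qed
    have id2: "set_integrable lborel {0..R} q \<and> 2 * (LINT t:{0..R}|lborel. q t) = (cmod (\<psi> R))\<^sup>2 - (cmod (\<psi> 0))\<^sup>2"
      if R: "0 \<le> R" for R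
    proof -
      have sub: "{0..R} \<subseteq> {0..}" by auto
      note E = edge_ibp[OF R sub a0 a0]
      have ce: "cnj (\<psi>1 t) * \<psi> t + cnj (\<psi> t) * \<psi>1 t = complex_of_real (2 * q t)" for t
      proof -
        have "cnj (\<psi>1 t) * \<psi> t = cnj (cnj (\<psi> t) * \<psi>1 t)" by simp
        then have "cnj (\<psi>1 t) * \<psi> t + cnj (\<psi> t) * \<psi>1 t = cnj (\<psi> t) * \<psi>1 t + cnj (cnj (\<psi> t) * \<psi>1 t)"
          by (simp only: add.commute)
        also have "\<dots> = complex_of_real (2 * Re (cnj (\<psi> t) * \<psi>1 t))" by (rule complex_add_cnj)
        finally show ?thesis unfolding q_def .
      qed
      have si: "set_integrable lborel {0..R} (\<lambda>t. complex_of_real (2 * q t))"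
        using set_integral_add(1)[OF E(1) E(2)] unfolding ce .
      have "(LINT t:{0..R}|lborel. complex_of_real (2 * q t)) = cnj (\<psi> R) * \<psi> R - cnj (\<psi> 0) * \<psi> 0"
        using set_integral_add(2)[OF E(1) E(2)] E(3) unfolding ce by simp
      then have "complex_of_real (2 * (LINT t:{0..R}|lborel. q t)) = complex_of_real ((cmod (\<psi> R))\<^sup>2 - (cmod (\<psi> 0))\<^sup>2)"
        unfolding set_integral_complex_of_real cn by simp
      then have e: "2 * (LINT t:{0..R}|lborel. q t) = (cmod (\<psi> R))\<^sup>2 - (cmod (\<psi> 0))\<^sup>2"
        using of_real_eq_iff by blast
      have "set_integrable lborel {0..R} (\<lambda>t. 2 * q t)"
        using si unfolding set_integrable_def
        by (simp add: scaleR_conv_of_real complex_of_real_integrable_eq[symmetric])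
      then have "set_integrable lborel {0..R} q" by simp
      then show ?thesis using e by simp
    qed
    define Q1 where "Q1 = (LINT t:{0..R1}|lborel. q t)"
    have growth: "(cmod (\<psi> R))\<^sup>2 \<ge> (cmod (\<psi> 0))\<^sup>2 + 2 * Q1 + 2 * (R - R1)" if R: "R \<ge> R1" for R
    proof -
      have R0: "0 \<le> R" using R R1 by simp
      have iR: "set_integrable lborel {0..R} q" using id2[OF R0] by simp
      have iA: "set_integrable lborel {0..R1} q" by (rule set_integrable_subset[OF iR]) (use R in auto)
      have iB: "set_integrable lborel {R1<..R} q" by (rule set_integrable_subset[OF iR]) (use R R1 in auto)
      have un: "{0..R} = {0..R1} \<union> {R1<..R}" using R R1 by auto
      have "(LINT t:{0..R}|lborel. q t) = Q1 + (LINT t:{R1<..R}|lborel. q t)"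
        unfolding Q1_def un by (rule set_integral_Un[OF _ iA iB]) auto
      moreover have "(LINT t:{R1<..R}|lborel. q t) \<ge> (LINT t:{R1<..R}|lborel. 1)"
        by (rule set_integral_mono) (use iB q1 R in \<open>auto intro!: integrable_real_indicator simp: set_integrable_def emeasure_lborel_Ioc\<close>)
      moreover have "(LINT t:{R1<..R}|lborel. (1::real)) = R - R1"
        using R by (subst set_integral_const) auto
      ultimately show ?thesis using id2[OF R0] by simp
    qed
    define R2 where "R2 = R1 + \<bar>1 - (cmod (\<psi> 0))\<^sup>2 - 2 * Q1\<bar>"
    have "\<forall>R\<ge>R2. 1 \<le> norm ((cmod (\<psi> R))\<^sup>2)"
    proof (intro allI impI)
      fix R assume "R \<ge> R2"
      then have "R \<ge> R1" unfolding R2_def by simp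
      from growth[OF this] \<open>R \<ge> R2\<close> show "1 \<le> norm ((cmod (\<psi> R))\<^sup>2)"
        unfolding R2_def by (simp add: abs_if split: if_splits) linarith?
    qed
    moreover have "set_integrable lborel {0..} (\<lambda>x. (cmod (\<psi> x))\<^sup>2)"
      using sq0 unfolding square_integrable_def by simp
    ultimately show False using no_pos_tail[of "\<lambda>x. (cmod (\<psi> x))\<^sup>2" 1 R2] by simp
  qed
qed

lemma ext_edge:
  fixes \<phi> \<phi>1 \<phi>2 \<psi> \<psi>1 \<psi>2 :: "real \<Rightarrow> complex"
  assumes H1: "edge_H2 {0..} \<phi> \<phi>1 \<phi>2" and H2: "edge_H2 {0..} \<psi> \<psi>1 \<psi>2"
  shows "(LINT x:{0..}|lborel. cnj (\<phi> x) * (- \<psi>2 x))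
     = (LINT x:{0..}|lborel. cnj (\<phi>1 x) * \<psi>1 x) + cnj (\<phi> 0) * \<psi>1 0"
proof -
  have sq0: "square_integrable {0..} \<phi>" and a0: "ac_with_deriv {0..} \<phi> \<phi>1"
    using H1 unfolding edge_H2_def by auto
  have sq2: "square_integrable {0..} \<psi>2" and a1: "ac_with_deriv {0..} \<psi>1 \<psi>2"
    using H2 unfolding edge_H2_def by auto
  have L1: "square_integrable {0..} \<phi>1" by (rule deriv_L2[OF H1])
  have L2: "square_integrable {0..} \<psi>1" by (rule deriv_L2[OF H2])
  have i1: "set_integrable lborel {0..} (\<lambda>t. cnj (\<phi>1 t) * \<psi>1 t)" by (rule sq_prod_int[OF L1 L2])
  have i2: "set_integrable lborel {0..} (\<lambda>t. cnj (\<phi> t) * \<psi>2 t)" by (rule sq_prod_int[OF sq0 sq2])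
  have i3: "set_integrable lborel {0..} (\<lambda>t. cnj (\<phi> t) * \<psi>1 t)" by (rule sq_prod_int[OF sq0 L2])
  have t1: "((\<lambda>b. LINT t:{0..b}|lborel. cnj (\<phi>1 t) * \<psi>1 t) \<longlongrightarrow> (LINT t:{0..}|lborel. cnj (\<phi>1 t) * \<psi>1 t)) at_top"
    by (rule tendsto_set_lebesgue_integral_at_top[OF _ i1]) auto
  have t2: "((\<lambda>b. LINT t:{0..b}|lborel. cnj (\<phi> t) * \<psi>2 t) \<longlongrightarrow> (LINT t:{0..}|lborel. cnj (\<phi> t) * \<psi>2 t)) at_top"
    by (rule tendsto_set_lebesgue_integral_at_top[OF _ i2]) auto
  define L where "L = (LINT t:{0..}|lborel. cnj (\<phi>1 t) * \<psi>1 t) + (LINT t:{0..}|lborel. cnj (\<phi> t) * \<psi>2 t) + cnj (\<phi> 0) * \<psi>1 0"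
  have ev: "\<forall>\<^sub>F R in at_top. (LINT t:{0..R}|lborel. cnj (\<phi>1 t) * \<psi>1 t) + (LINT t:{0..R}|lborel. cnj (\<phi> t) * \<psi>2 t) + cnj (\<phi> 0) * \<psi>1 0
      = cnj (\<phi> R) * \<psi>1 R"
    unfolding eventually_at_top_linorder
  proof (intro exI allI impI)
    fix R :: real assume R: "R \<ge> 0"
    have sub: "{0..R} \<subseteq> {0..}" by auto
    from edge_ibp(3)[OF R sub a0 a1]
    show "(LINT t:{0..R}|lborel. cnj (\<phi>1 t) * \<psi>1 t) + (LINT t:{0..R}|lborel. cnj (\<phi> t) * \<psi>2 t) + cnj (\<phi> 0) * \<psi>1 0
      = cnj (\<phi> R) * \<psi>1 R" by (simp add: algebra_simps)
  qed
  have "((\<lambda>R. (LINT t:{0..R}|lborel. cnj (\<phi>1 t) * \<psi>1 t) + (LINT t:{0..R}|lborel. cnj (\<phi> t) * \<psi>2 t) + cnj (\<phi> 0) * \<psi>1 0) \<longlongrightarrow> L) at_top"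
    unfolding L_def by (intro tendsto_add t1 t2 tendsto_const)
  then have "((\<lambda>R. cnj (\<phi> R) * \<psi>1 R) \<longlongrightarrow> L) at_top"
    using ev by (rule Lim_transform_eventually)
  then have L0: "L = 0" by (rule lim_zero[OF i3])
  have "(LINT x:{0..}|lborel. cnj (\<phi> x) * (- \<psi>2 x)) = - (LINT x:{0..}|lborel. cnj (\<phi> x) * \<psi>2 x)"
    by (simp add: set_lebesgue_integral_def)
  also have "\<dots> = (LINT t:{0..}|lborel. cnj (\<phi>1 t) * \<psi>1 t) + cnj (\<phi> 0) * \<psi>1 0 - L"
    unfolding L_def by (simp add: algebra_simps)
  finally show ?thesis using L0 by simp
qed

lemma adj_dims[simp]: "dim_row (mat_adjoint A) = dim_col A" "dim_col (mat_adjoint A) = dim_row A"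
  unfolding mat_adjoint_def by (auto simp: mat_of_rows_def)

lemma adj_carrier[simp, intro]: "A \<in> carrier_mat r c \<Longrightarrow> mat_adjoint A \<in> carrier_mat c r"
  unfolding carrier_mat_def by simp

lemma adj_index[simp]: "i < dim_col A \<Longrightarrow> j < dim_row A \<Longrightarrow> mat_adjoint A $$ (i,j) = cnj (A $$ (j,i))"
  unfolding mat_adjoint_def by (simp add: mat_of_rows_def)

lemma kinner_adj:
  fixes A :: "complex mat"
  assumes A: "A \<in> carrier_mat r c" and x: "x \<in> carrier_vec r" and y: "y \<in> carrier_vec c"
  shows "kinner x (A *\<^sub>v y) = kinner (mat_adjoint A *\<^sub>v x) y"
proof -
  have "kinner x (A *\<^sub>v y) = (\<Sum>k<r. cnj (x $ k) * (\<Sum>l<c. A $$ (k,l) * y $ l))"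
    using A x y unfolding kinner_def by (simp add: scalar_prod_def row_def atLeast0LessThan)
  also have "\<dots> = (\<Sum>k<r. \<Sum>l<c. cnj (x $ k) * A $$ (k,l) * y $ l)"
    by (simp add: sum_distrib_left mult.assoc)
  also have "\<dots> = (\<Sum>l<c. \<Sum>k<r. cnj (x $ k) * A $$ (k,l) * y $ l)"
    by (rule sum.swap)
  also have "\<dots> = (\<Sum>l<c. cnj (\<Sum>k<r. cnj (A $$ (k,l)) * x $ k) * y $ l)"
    by (auto simp: sum_distrib_right sum_distrib_left mult_ac intro!: sum.cong)
  also have "\<dots> = kinner (mat_adjoint A *\<^sub>v x) y"
    using A x y unfolding kinner_def by (simp add: scalar_prod_def row_def atLeast0LessThan)
  finally show ?thesis .
qed

lemma kinner_cnj: "dim_vec x = dim_vec y \<Longrightarrow> kinner y x = cnj (kinner x y)"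
  unfolding kinner_def by (simp add: mult.commute)

lemma kinner_adj':
  fixes A :: "complex mat"
  assumes A: "A \<in> carrier_mat r c" and x: "x \<in> carrier_vec c" and y: "y \<in> carrier_vec r"
  shows "kinner (A *\<^sub>v x) y = kinner x (mat_adjoint A *\<^sub>v y)"
proof -
  have "kinner (A *\<^sub>v x) y = cnj (kinner y (A *\<^sub>v x))" using A x y by (subst kinner_cnj) auto
  also have "\<dots> = cnj (kinner (mat_adjoint A *\<^sub>v y) x)" using kinner_adj[OF A y x] by simp
  also have "\<dots> = kinner x (mat_adjoint A *\<^sub>v y)" using A x y by (subst kinner_cnj) auto
  finally show ?thesis .
qed

lemma kinner_add_right: assumes "dim_vec y = dim_vec x" "dim_vec z = dim_vec x"
  shows "kinner x (y + z) = kinner x y + kinner x z"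
proof -
  have "\<forall>k<dim_vec x. cnj (x$k) * (y+z)$k = cnj (x$k) * y$k + cnj (x$k) * z$k"
    using assms by (simp add: algebra_simps)
  then show ?thesis unfolding kinner_def by (simp add: sum.distrib)
qed
lemma kinner_diff_right: assumes "dim_vec y = dim_vec x" "dim_vec z = dim_vec x"
  shows "kinner x (y - z) = kinner x y - kinner x z"
proof -
  have "\<forall>k<dim_vec x. cnj (x$k) * (y-z)$k = cnj (x$k) * y$k - cnj (x$k) * z$k"
    using assms by (simp add: algebra_simps)
  then show ?thesis unfolding kinner_def by (simp add: sum_subtractf)
qed
lemma kinner_diff_left: assumes "dim_vec y = dim_vec x"
  shows "kinner (x - y) z = kinner x z - kinner y z"
proof -
  have "\<forall>k<dim_vec x. cnj ((x-y)$k) * z$k = cnj (x$k) * z$k - cnj (y$k) * z$k"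
    using assms by (simp add: algebra_simps)
  then show ?thesis using assms unfolding kinner_def by (simp add: sum_subtractf)
qed
lemma kinner_uminus_right: assumes "dim_vec y = dim_vec x" shows "kinner x (- y) = - kinner x y"
proof -
  have "\<forall>k<dim_vec x. cnj (x$k) * (-y)$k = - (cnj (x$k) * y$k)"
    using assms by simp
  then show ?thesis unfolding kinner_def by (simp add: sum_negf)
qed
lemma kinner_uminus_left: "kinner (- x) y = - kinner x y"
proof -
  have "\<forall>k<dim_vec x. cnj ((-x)$k) * y$k = - (cnj (x$k) * y$k)" by simp
  then show ?thesis unfolding kinner_def by (simp add: sum_negf)
qed
lemma kinner_zero_right: "dim_vec x = n \<Longrightarrow> kinner x (0\<^sub>v n) = 0"
  unfolding kinner_def by simp

lemma sum_lt_add: fixes m n :: nat shows "(\<Sum>k<m+n. f k) = (\<Sum>k<m. f k) + (\<Sum>k<n. f (m+k))"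
  by (induct n) (simp_all add: ac_simps)

lemma kinner_append:
  assumes "dim_vec u1 = dim_vec w1" "dim_vec u2 = dim_vec w2"
  shows "kinner (u1 @\<^sub>v u2) (w1 @\<^sub>v w2) = kinner u1 w1 + kinner u2 w2"
proof -
  let ?n = "dim_vec u1" and ?m = "dim_vec u2"
  have "kinner (u1 @\<^sub>v u2) (w1 @\<^sub>v w2) = (\<Sum>k<?n + ?m. cnj ((u1 @\<^sub>v u2) $ k) * (w1 @\<^sub>v w2) $ k)"
    unfolding kinner_def by simp
  also have "\<dots> = (\<Sum>k<?n. cnj ((u1 @\<^sub>v u2) $ k) * (w1 @\<^sub>v w2) $ k) + (\<Sum>k<?m. cnj ((u1 @\<^sub>v u2) $ (?n + k)) * (w1 @\<^sub>v w2) $ (?n + k))"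
    by (subst sum_lt_add) auto
  also have "\<dots> = kinner u1 w1 + kinner u2 w2"
    using assms unfolding kinner_def by simp
  finally show ?thesis .
qed

definition nsq :: "complex vec \<Rightarrow> real" where
  "nsq x = (\<Sum>k<dim_vec x. (cmod (x $ k))\<^sup>2)"

lemma kinner_self: "kinner x x = complex_of_real (nsq x)"
  unfolding kinner_def nsq_def of_real_sum
  by (intro sum.cong refl) (subst complex_norm_square, rule mult.commute)

lemma nsq_nonneg: "nsq x \<ge> 0" unfolding nsq_def by (simp add: sum_nonneg)

lemma nsq_zero: assumes "nsq x = 0" shows "x = 0\<^sub>v (dim_vec x)"
proof (rule eq_vecI)
  fix i assume i: "i < dim_vec (0\<^sub>v (dim_vec x))"
  have "\<forall>k\<in>{..<dim_vec x}. (cmod (x $ k))\<^sup>2 = 0"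
    using assms unfolding nsq_def by (subst sum_nonneg_eq_0_iff[symmetric]) auto
  then show "x $ i = 0\<^sub>v (dim_vec x) $ i" using i by auto
qed simp

lemma kinner_self_zero: "kinner x x = 0 \<Longrightarrow> x = 0\<^sub>v (dim_vec x)"
  using nsq_zero kinner_self by simp

lemma kinner_self_sum_zero:
  assumes "kinner x x + kinner y y = 0" shows "x = 0\<^sub>v (dim_vec x)" "y = 0\<^sub>v (dim_vec y)"
proof -
  have "nsq x + nsq y = 0" using assms unfolding kinner_self
    by (metis of_real_add of_real_eq_0_iff)
  then have "nsq x = 0" "nsq y = 0" using nsq_nonneg[of x] nsq_nonneg[of y] by linarith+
  then show "x = 0\<^sub>v (dim_vec x)" "y = 0\<^sub>v (dim_vec y)" using nsq_zero by auto
qed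

lemma hblock_dims[simp]: "dim_row (hblock X Y) = dim_row X" "dim_col (hblock X Y) = dim_col X + dim_col Y"
  unfolding hblock_def by auto
lemma vblock_dims[simp]: "dim_row (vblock X Y) = dim_row X + dim_row Y" "dim_col (vblock X Y) = dim_col X"
  unfolding vblock_def by auto

lemma hblock_carrier[simp]: "X \<in> carrier_mat r c1 \<Longrightarrow> Y \<in> carrier_mat r c2 \<Longrightarrow> hblock X Y \<in> carrier_mat r (c1 + c2)"
  unfolding hblock_def by auto
lemma vblock_carrier[simp]: "X \<in> carrier_mat r1 c \<Longrightarrow> Y \<in> carrier_mat r2 c \<Longrightarrow> vblock X Y \<in> carrier_mat (r1 + r2) c"
  unfolding vblock_def by auto

lemma hblock_mult:
  fixes X Y :: "complex mat"
  assumes X: "X \<in> carrier_mat r c1" and Y: "Y \<in> carrier_mat r c2" and u: "u \<in> carrier_vec c1" and v: "v \<in> carrier_vec c2"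
  shows "hblock X Y *\<^sub>v (u @\<^sub>v v) = X *\<^sub>v u + Y *\<^sub>v v"
proof (rule eq_vecI)
  fix i assume "i < dim_vec (X *\<^sub>v u + Y *\<^sub>v v)"
  then have i: "i < r" using Y by simp
  have "(hblock X Y *\<^sub>v (u @\<^sub>v v)) $ i = (\<Sum>k<c1 + c2. hblock X Y $$ (i,k) * (u @\<^sub>v v) $ k)"
    using X Y u v i by (simp add: scalar_prod_def row_def atLeast0LessThan del: index_append_vec(1))
  also have "\<dots> = (\<Sum>k<c1. hblock X Y $$ (i,k) * (u @\<^sub>v v) $ k) + (\<Sum>k<c2. hblock X Y $$ (i,c1+k) * (u @\<^sub>v v) $ (c1+k))"
    by (subst sum_lt_add) auto
  also have "\<dots> = (\<Sum>k<c1. X $$ (i,k) * u $ k) + (\<Sum>k<c2. Y $$ (i,k) * v $ k)"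
    using X Y u v i by (simp add: hblock_def)
  also have "\<dots> = (X *\<^sub>v u + Y *\<^sub>v v) $ i"
    using X Y u v i by (simp add: scalar_prod_def row_def atLeast0LessThan)
  finally show "(hblock X Y *\<^sub>v (u @\<^sub>v v)) $ i = (X *\<^sub>v u + Y *\<^sub>v v) $ i" .
qed (use X Y in \<open>simp add: hblock_def\<close>)

lemma vblock_mult:
  fixes X Y :: "complex mat"
  assumes X: "X \<in> carrier_mat r1 c" and Y: "Y \<in> carrier_mat r2 c" and u: "u \<in> carrier_vec c"
  shows "vblock X Y *\<^sub>v u = (X *\<^sub>v u) @\<^sub>v (Y *\<^sub>v u)"
proof (rule eq_vecI)
  fix i assume "i < dim_vec ((X *\<^sub>v u) @\<^sub>v (Y *\<^sub>v u))"
  then have i: "i < r1 + r2" using X Y by simp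
  show "(vblock X Y *\<^sub>v u) $ i = ((X *\<^sub>v u) @\<^sub>v (Y *\<^sub>v u)) $ i"
    using X Y u i by (simp add: vblock_def scalar_prod_def row_def)
qed (use X Y in \<open>simp add: vblock_def\<close>)

lemma Qmat_mult:
  fixes u v :: "complex vec"
  assumes u: "u \<in> carrier_vec n" and v: "v \<in> carrier_vec n"
  shows "Qmat n *\<^sub>v (u @\<^sub>v v) = v @\<^sub>v 0\<^sub>v n"
  unfolding Qmat_def using u v
  by (subst four_block_mat_mult_vec[of "0\<^sub>m n n" n n "1\<^sub>m n" n "0\<^sub>m n n" n "0\<^sub>m n n" u v]) auto

lemma mat_eq_vecI:
  fixes M N :: "complex mat"
  assumes M: "M \<in> carrier_mat r c" and N: "N \<in> carrier_mat r c"
  and eq: "\<And>v. v \<in> carrier_vec c \<Longrightarrow> M *\<^sub>v v = N *\<^sub>v v"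
  shows "M = N"
proof (rule eq_matI)
  fix i j assume i: "i < dim_row N" and j: "j < dim_col N"
  have "(M *\<^sub>v unit_vec c j) $ i = (N *\<^sub>v unit_vec c j) $ i" using eq[of "unit_vec c j"] by simp
  then show "M $$ (i,j) = N $$ (i,j)" using M N i j by simp
qed (use M N in auto)

lemma mult_mat_vec_uminus:
  fixes A :: "complex mat"
  assumes "A \<in> carrier_mat r c" "v \<in> carrier_vec c"
  shows "A *\<^sub>v (- v) = - (A *\<^sub>v v)"
  using assms by (intro eq_vecI) auto

lemma MAB_diff:
  assumes A: "A \<in> carrier_mat n n" and B: "B \<in> carrier_mat n n"
    and m: "\<mu> \<in> MAB n A B" and v: "\<nu> \<in> MAB n A B"
  shows "\<mu> - \<nu> \<in> MAB n A B"
proof -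
  have H: "hblock A B \<in> carrier_mat n (2*n)" using A B by (simp add: mult_2)
  have c: "\<mu> \<in> carrier_vec (2*n)" "\<nu> \<in> carrier_vec (2*n)" using m v unfolding MAB_def by auto
  have "hblock A B *\<^sub>v (\<mu> - \<nu>) = hblock A B *\<^sub>v \<mu> - hblock A B *\<^sub>v \<nu>"
    by (rule mult_minus_distrib_mat_vec[OF H c])
  then show ?thesis using m v c unfolding MAB_def by auto
qed

lemma proj_fix:
  assumes A: "A \<in> carrier_mat n n" and B: "B \<in> carrier_mat n n"
    and P: "is_orth_proj (2*n) (MAB n A B) P" and m: "\<mu> \<in> MAB n A B"
  shows "P *\<^sub>v \<mu> = \<mu>"
proof -
  have mc: "\<mu> \<in> carrier_vec (2*n)" using m unfolding MAB_def by auto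
  have Pc: "P \<in> carrier_mat (2*n) (2*n)" and Pm: "P *\<^sub>v \<mu> \<in> MAB n A B"
    and orth: "\<forall>\<nu>\<in>MAB n A B. kinner \<nu> (\<mu> - P *\<^sub>v \<mu>) = 0"
    using P mc unfolding is_orth_proj_def by auto
  define d where "d = \<mu> - P *\<^sub>v \<mu>"
  have dm: "d \<in> MAB n A B" unfolding d_def by (rule MAB_diff[OF A B m Pm])
  have "kinner d d = kinner \<mu> d - kinner (P *\<^sub>v \<mu>) d"
    unfolding d_def using mc Pc by (intro kinner_diff_left) auto
  also have "\<dots> = 0" using orth m Pm unfolding d_def by auto
  finally have "d = 0\<^sub>v (dim_vec d)" by (rule kinner_self_zero)
  then have d0: "d = 0\<^sub>v (dim_vec d)" .
  have dim: "dim_vec \<mu> = 2*n" "dim_vec (P *\<^sub>v \<mu>) = 2*n" "dim_vec d = 2*n"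
    using mc Pc unfolding d_def by auto
  show ?thesis
  proof (rule eq_vecI)
    fix i assume i: "i < dim_vec \<mu>"
    have "d $ i = 0\<^sub>v (dim_vec d) $ i" using d0 by simp
    also have "\<dots> = 0" using i dim by simp
    finally have "\<mu> $ i - (P *\<^sub>v \<mu>) $ i = 0" unfolding d_def using i dim by simp
    then show "(P *\<^sub>v \<mu>) $ i = \<mu> $ i" by simp
  qed (use dim in auto)
qed

lemma proj_inner:
  assumes P: "is_orth_proj (2*n) (MAB n A B) P" and m: "\<mu> \<in> MAB n A B" and w: "w \<in> carrier_vec (2*n)"
  shows "kinner \<mu> (P *\<^sub>v w) = kinner \<mu> w"
proof -
  have mc: "\<mu> \<in> carrier_vec (2*n)" using m unfolding MAB_def by auto
  have Pc: "P \<in> carrier_mat (2*n) (2*n)" and orth: "kinner \<mu> (w - P *\<^sub>v w) = 0"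
    using P m w unfolding is_orth_proj_def by auto
  have "kinner \<mu> (w - P *\<^sub>v w) = kinner \<mu> w - kinner \<mu> (P *\<^sub>v w)"
    using mc Pc w by (intro kinner_diff_right) auto
  then show ?thesis using orth by simp
qed

lemma diff_zero_eq:
  fixes a b :: "'a::ab_group_add vec"
  assumes a: "a \<in> carrier_vec n" and b: "b \<in> carrier_vec n" and d: "a - b = 0\<^sub>v n"
  shows "a = b"
proof (rule eq_vecI)
  fix i assume i: "i < dim_vec b"
  have "(a - b) $ i = 0" using d i b by simp
  then show "a $ i = b $ i" using i a b by simp
qed (use a b in auto)

lemma adj_inj_zero:
  fixes A :: "complex mat"
  assumes "kinner x x = 0" shows "x = 0\<^sub>v (dim_vec x)"
  using assms by (rule kinner_self_zero)

lemma PQP_formula: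
  fixes A B P :: "complex mat"
  assumes A: "A \<in> carrier_mat n n" and B: "B \<in> carrier_mat n n"
    and rank: "maximal_rank n A B"
    and selfadj: "A * mat_adjoint B = mat_adjoint (A * mat_adjoint B)"
    and P: "is_orth_proj (2 * n) (MAB n A B) P"
  shows "P * Qmat n * P = QAB A B"
proof -
  define Ad where "Ad = mat_adjoint A"
  define Bd where "Bd = mat_adjoint B"
  have Ad: "Ad \<in> carrier_mat n n" and Bd: "Bd \<in> carrier_mat n n" unfolding Ad_def Bd_def using A B by auto
  have Pc: "P \<in> carrier_mat (2*n) (2*n)" using P unfolding is_orth_proj_def by auto
  \<comment> \<open>the key commutation from self-adjointness\<close>
  have S: "B *\<^sub>v (Ad *\<^sub>v y) = A *\<^sub>v (Bd *\<^sub>v y)" if y: "y \<in> carrier_vec n" for y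
  proof -
    define M where "M = A * Bd"
    have Mc: "M \<in> carrier_mat n n" unfolding M_def using A Bd by auto
    have MM: "mat_adjoint M = M" unfolding M_def Bd_def using selfadj by simp
    have Mv: "M *\<^sub>v z = A *\<^sub>v (Bd *\<^sub>v z)" if "z \<in> carrier_vec n" for z
      unfolding M_def using A Bd that by simp
    define d where "d = B *\<^sub>v (Ad *\<^sub>v y) - A *\<^sub>v (Bd *\<^sub>v y)"
    have dc: "d \<in> carrier_vec n" unfolding d_def using A B Ad Bd y by auto
    have "kinner d (B *\<^sub>v (Ad *\<^sub>v y)) = kinner (Bd *\<^sub>v d) (Ad *\<^sub>v y)"
      unfolding Bd_def by (rule kinner_adj[OF B dc]) (use Ad y in auto)
    also have "\<dots> = kinner (A *\<^sub>v (Bd *\<^sub>v d)) y"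
      unfolding Ad_def by (rule kinner_adj'[OF A, symmetric]) (use Bd dc y in auto)
    also have "\<dots> = kinner (M *\<^sub>v d) y" using Mv[OF dc] by simp
    also have "\<dots> = kinner (mat_adjoint M *\<^sub>v d) y" using MM by simp
    also have "\<dots> = kinner d (M *\<^sub>v y)" by (rule kinner_adj[OF Mc dc y, symmetric])
    also have "\<dots> = kinner d (A *\<^sub>v (Bd *\<^sub>v y))" using Mv[OF y] by simp
    finally have eq: "kinner d (B *\<^sub>v (Ad *\<^sub>v y)) = kinner d (A *\<^sub>v (Bd *\<^sub>v y))" .
    have "kinner d (B *\<^sub>v (Ad *\<^sub>v y) - A *\<^sub>v (Bd *\<^sub>v y)) = kinner d (B *\<^sub>v (Ad *\<^sub>v y)) - kinner d (A *\<^sub>v (Bd *\<^sub>v y))"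
      by (rule kinner_diff_right) (use dc A B Ad Bd y in auto)
    then have "kinner d d = 0" using eq unfolding d_def[symmetric] by simp
    then have "d = 0\<^sub>v n" using kinner_self_zero[of d] dc by auto
    then show ?thesis unfolding d_def by (rule diff_zero_eq[rotated 2]) (use A B Ad Bd y in auto)
  qed
  have kz: "kinner (0\<^sub>v m) w = 0" for m and w :: "complex vec"
    unfolding kinner_def by simp
  define G where "G = A * Ad + B * Bd"
  have Gc: "G \<in> carrier_mat n n" unfolding G_def using A B Ad Bd by auto
  have Gv: "G *\<^sub>v z = A *\<^sub>v (Ad *\<^sub>v z) + B *\<^sub>v (Bd *\<^sub>v z)" if z: "z \<in> carrier_vec n" for z
    unfolding G_def using A B Ad Bd z by (simp add: add_mult_distrib_mat_vec[of _ n n])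
  have G_inj: "z = 0\<^sub>v n" if z: "z \<in> carrier_vec n" and Gz: "G *\<^sub>v z = 0\<^sub>v n" for z
  proof -
    have "kinner z (G *\<^sub>v z) = kinner z (A *\<^sub>v (Ad *\<^sub>v z)) + kinner z (B *\<^sub>v (Bd *\<^sub>v z))"
      unfolding Gv[OF z] by (rule kinner_add_right) (use z A B Ad Bd in auto)
    also have "\<dots> = kinner (Ad *\<^sub>v z) (Ad *\<^sub>v z) + kinner (Bd *\<^sub>v z) (Bd *\<^sub>v z)"
      using kinner_adj[OF A z, of "Ad *\<^sub>v z"] kinner_adj[OF B z, of "Bd *\<^sub>v z"] Ad Bd z
      unfolding Ad_def Bd_def by simp
    finally have "kinner (Ad *\<^sub>v z) (Ad *\<^sub>v z) + kinner (Bd *\<^sub>v z) (Bd *\<^sub>v z) = 0"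
      using Gz z by (simp add: kinner_zero_right)
    from kinner_self_sum_zero[OF this] have Az: "Ad *\<^sub>v z = 0\<^sub>v n" and Bz: "Bd *\<^sub>v z = 0\<^sub>v n"
      using Ad Bd by auto
    obtain w where w: "w \<in> carrier_vec (2*n)" and hw: "hblock A B *\<^sub>v w = z"
      using rank z unfolding maximal_rank_def by blast
    define w1 where "w1 = vec_first w n"
    define w2 where "w2 = vec_last w n"
    have w12: "w = w1 @\<^sub>v w2" unfolding w1_def w2_def using w by (simp add: mult_2)
    have w1c: "w1 \<in> carrier_vec n" and w2c: "w2 \<in> carrier_vec n" unfolding w1_def w2_def by auto
    have zz: "z = A *\<^sub>v w1 + B *\<^sub>v w2" using hw hblock_mult[OF A B w1c w2c] unfolding w12 by simp
    have "kinner z z = kinner z (A *\<^sub>v w1) + kinner z (B *\<^sub>v w2)"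
      by (subst (2) zz, rule kinner_add_right) (use z A B w1c w2c in auto)
    also have "\<dots> = kinner (Ad *\<^sub>v z) w1 + kinner (Bd *\<^sub>v z) w2"
      using kinner_adj[OF A z w1c] kinner_adj[OF B z w2c] unfolding Ad_def Bd_def by simp
    also have "\<dots> = 0" unfolding Az Bz kz by simp
    finally show ?thesis using kinner_self_zero[of z] z by auto
  qed
  have detG: "det G \<noteq> 0" using det_0_iff_vec_prod_zero[OF Gc] G_inj by auto
  obtain R where R: "mat_inverse G = Some R"
  proof (cases "mat_inverse G")
    case None
    show ?thesis using det_non_zero_imp_unit[OF Gc detG, of "()"] mat_inverse(1)[OF Gc None, of "()"] by blast
  qed
  from mat_inverse(2)[OF Gc R] have GR: "G * R = 1\<^sub>m n" and Rc: "R \<in> carrier_mat n n" by auto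
  have GRv: "G *\<^sub>v (R *\<^sub>v z) = z" if "z \<in> carrier_vec n" for z
  proof -
    have "G *\<^sub>v (R *\<^sub>v z) = (G * R) *\<^sub>v z" using Gc Rc that by simp
    then show ?thesis using GR that by simp
  qed
  have Bdu: "(- Bd) \<in> carrier_mat n n" using Bd by simp
  have Bu: "(- B) \<in> carrier_mat n n" using B by simp
  define V where "V = vblock (- Bd) Ad"
  define W where "W = vblock Ad Bd"
  define H where "H = hblock A B"
  define H' where "H' = hblock (- B) A"
  have Vc: "V \<in> carrier_mat (2*n) n" unfolding V_def using Bdu Ad vblock_carrier[OF Bdu Ad] by (simp add: mult_2)
  have Wc: "W \<in> carrier_mat (2*n) n" unfolding W_def using vblock_carrier[OF Ad Bd] by (simp add: mult_2)
  have Hc: "H \<in> carrier_mat n (2*n)" unfolding H_def using hblock_carrier[OF A B] by (simp add: mult_2)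
  have H'c: "H' \<in> carrier_mat n (2*n)" unfolding H'_def using hblock_carrier[OF Bu A] by (simp add: mult_2)
  have Vv: "V *\<^sub>v y = (- (Bd *\<^sub>v y)) @\<^sub>v (Ad *\<^sub>v y)" if y: "y \<in> carrier_vec n" for y
    unfolding V_def using vblock_mult[OF Bdu Ad y] Bd y by simp
  have Wv: "W *\<^sub>v y = (Ad *\<^sub>v y) @\<^sub>v (Bd *\<^sub>v y)" if y: "y \<in> carrier_vec n" for y
    unfolding W_def using vblock_mult[OF Ad Bd y] by simp
  have Hv: "H *\<^sub>v (a @\<^sub>v b) = A *\<^sub>v a + B *\<^sub>v b" if "a \<in> carrier_vec n" "b \<in> carrier_vec n" for a b
    unfolding H_def by (rule hblock_mult[OF A B that])
  have H'v: "H' *\<^sub>v (a @\<^sub>v b) = - (B *\<^sub>v a) + A *\<^sub>v b" if "a \<in> carrier_vec n" "b \<in> carrier_vec n" for a b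
    unfolding H'_def using hblock_mult[OF Bu A that] B that by simp
  have HV: "H *\<^sub>v (V *\<^sub>v y) = 0\<^sub>v n" if y: "y \<in> carrier_vec n" for y
  proof -
    have "H *\<^sub>v (V *\<^sub>v y) = A *\<^sub>v (- (Bd *\<^sub>v y)) + B *\<^sub>v (Ad *\<^sub>v y)"
      unfolding Vv[OF y] by (rule Hv) (use Bd Ad y in auto)
    also have "\<dots> = - (A *\<^sub>v (Bd *\<^sub>v y)) + A *\<^sub>v (Bd *\<^sub>v y)"
      using mult_mat_vec_uminus[OF A, of "Bd *\<^sub>v y"] S[OF y] Bd y by simp
    also have "\<dots> = 0\<^sub>v n" using A Bd y by simp
    finally show ?thesis .
  qed
  have H'V: "H' *\<^sub>v (V *\<^sub>v y) = G *\<^sub>v y" if y: "y \<in> carrier_vec n" for y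
  proof -
    have "H' *\<^sub>v (V *\<^sub>v y) = - (B *\<^sub>v (- (Bd *\<^sub>v y))) + A *\<^sub>v (Ad *\<^sub>v y)"
      unfolding Vv[OF y] by (rule H'v) (use Bd Ad y in auto)
    also have "\<dots> = B *\<^sub>v (Bd *\<^sub>v y) + A *\<^sub>v (Ad *\<^sub>v y)"
      using mult_mat_vec_uminus[OF B, of "Bd *\<^sub>v y"] Bd y by simp
    also have "\<dots> = G *\<^sub>v y" unfolding Gv[OF y] using A B Ad Bd y by (simp add: comm_add_vec[of _ n])
    finally show ?thesis .
  qed
  have HW: "H *\<^sub>v (W *\<^sub>v y) = G *\<^sub>v y" if y: "y \<in> carrier_vec n" for y
    unfolding Wv[OF y] Gv[OF y] by (rule Hv) (use Bd Ad y in auto)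
  have H'W: "H' *\<^sub>v (W *\<^sub>v y) = 0\<^sub>v n" if y: "y \<in> carrier_vec n" for y
  proof -
    have "H' *\<^sub>v (W *\<^sub>v y) = - (B *\<^sub>v (Ad *\<^sub>v y)) + A *\<^sub>v (Bd *\<^sub>v y)"
      unfolding Wv[OF y] by (rule H'v) (use Bd Ad y in auto)
    also have "\<dots> = 0\<^sub>v n" using S[OF y] A Bd y by simp
    finally show ?thesis .
  qed
  have split: "\<exists>a b. a \<in> carrier_vec n \<and> b \<in> carrier_vec n \<and> u = a @\<^sub>v b" if u: "u \<in> carrier_vec (2*n)" for u
  proof (intro exI conjI)
    show "u = vec_first u n @\<^sub>v vec_last u n" using u by (simp add: mult_2)
  qed auto
  have Hlin: "M *\<^sub>v (a + b) = M *\<^sub>v a + M *\<^sub>v b" if "M \<in> carrier_mat n (2*n)" "a \<in> carrier_vec (2*n)" "b \<in> carrier_vec (2*n)" for M a b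
    using that by (rule mult_add_distrib_mat_vec)
  have zmv: "M *\<^sub>v 0\<^sub>v c = 0\<^sub>v r" if "M \<in> carrier_mat r c" for M :: "complex mat" and r c
    using that by (intro eq_vecI) auto
  define T where "T = hblock V W"
  have Tc: "T \<in> carrier_mat (2*n) (2*n)" unfolding T_def using hblock_carrier[OF Vc Wc] by (simp add: mult_2)
  have Tv: "T *\<^sub>v (y @\<^sub>v z) = V *\<^sub>v y + W *\<^sub>v z" if "y \<in> carrier_vec n" "z \<in> carrier_vec n" for y z
    unfolding T_def by (rule hblock_mult[OF Vc Wc that])
  have T_inj: "u = 0\<^sub>v (2*n)" if u: "u \<in> carrier_vec (2*n)" and Tu: "T *\<^sub>v u = 0\<^sub>v (2*n)" for u
  proof -
    obtain y z where y: "y \<in> carrier_vec n" and z: "z \<in> carrier_vec n" and uyz: "u = y @\<^sub>v z"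
      using split[OF u] by blast
    have e: "V *\<^sub>v y + W *\<^sub>v z = 0\<^sub>v (2*n)" using Tu Tv[OF y z] uyz by simp
    have "H *\<^sub>v (V *\<^sub>v y + W *\<^sub>v z) = 0\<^sub>v n + G *\<^sub>v z"
      using Hlin[OF Hc, of "V *\<^sub>v y" "W *\<^sub>v z"] HV[OF y] HW[OF z] Vc Wc y z by simp
    then have "G *\<^sub>v z = 0\<^sub>v n" using e Hc Gc z zmv[OF Hc] by simp
    then have z0: "z = 0\<^sub>v n" by (rule G_inj[OF z])
    have "H' *\<^sub>v (V *\<^sub>v y + W *\<^sub>v z) = G *\<^sub>v y + 0\<^sub>v n"
      using Hlin[OF H'c, of "V *\<^sub>v y" "W *\<^sub>v z"] H'V[OF y] H'W[OF z] Vc Wc y z by simp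
    then have "G *\<^sub>v y = 0\<^sub>v n" using e H'c Gc y zmv[OF H'c] by simp
    then have y0: "y = 0\<^sub>v n" by (rule G_inj[OF y])
    show ?thesis unfolding uyz y0 z0 by (intro eq_vecI) auto
  qed
  have detT: "det T \<noteq> 0" using det_0_iff_vec_prod_zero[OF Tc] T_inj by auto
  from det_non_zero_imp_unit[OF Tc detT, of "()"]
  obtain T' where T'c: "T' \<in> carrier_mat (2*n) (2*n)" and TT': "T * T' = 1\<^sub>m (2*n)"
    unfolding Units_def ring_mat_def by auto
  have MV: "\<exists>y\<in>carrier_vec n. \<mu> = V *\<^sub>v y" if m: "\<mu> \<in> MAB n A B" for \<mu>
  proof -
    have mc: "\<mu> \<in> carrier_vec (2*n)" and Hm: "H *\<^sub>v \<mu> = 0\<^sub>v n" using m unfolding MAB_def H_def by auto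
    have "\<mu> = T *\<^sub>v (T' *\<^sub>v \<mu>)" using TT' Tc T'c mc by (metis assoc_mult_mat_vec one_mult_mat_vec)
    moreover obtain y z where y: "y \<in> carrier_vec n" and z: "z \<in> carrier_vec n" and uyz: "T' *\<^sub>v \<mu> = y @\<^sub>v z"
      using split[of "T' *\<^sub>v \<mu>"] T'c mc by auto
    ultimately have mu: "\<mu> = V *\<^sub>v y + W *\<^sub>v z" using Tv[OF y z] by simp
    have "H *\<^sub>v \<mu> = 0\<^sub>v n + G *\<^sub>v z"
      unfolding mu using Hlin[OF Hc, of "V *\<^sub>v y" "W *\<^sub>v z"] HV[OF y] HW[OF z] Vc Wc y z by simp
    then have "G *\<^sub>v z = 0\<^sub>v n" using Hm Gc z by simp
    then have z0: "z = 0\<^sub>v n" by (rule G_inj[OF z])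
    have "W *\<^sub>v 0\<^sub>v n = 0\<^sub>v (2*n)" using Wc by (intro eq_vecI) auto
    then have "\<mu> = V *\<^sub>v y" using mu z0 Vc y by simp
    then show ?thesis using y by blast
  qed
  have VH': "kinner (V *\<^sub>v y) x = kinner y (H' *\<^sub>v x)" if y: "y \<in> carrier_vec n" and x: "x \<in> carrier_vec (2*n)" for y x
  proof -
    obtain a b where a: "a \<in> carrier_vec n" and b: "b \<in> carrier_vec n" and xab: "x = a @\<^sub>v b"
      using split[OF x] by blast
    have "kinner (V *\<^sub>v y) x = kinner (- (Bd *\<^sub>v y)) a + kinner (Ad *\<^sub>v y) b"
      unfolding Vv[OF y] xab by (rule kinner_append) (use Bd Ad y a b in auto)
    also have "\<dots> = - kinner (Bd *\<^sub>v y) a + kinner (Ad *\<^sub>v y) b" by (simp add: kinner_uminus_left)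
    also have "\<dots> = - kinner y (B *\<^sub>v a) + kinner y (A *\<^sub>v b)"
      using kinner_adj[OF A y b] kinner_adj[OF B y a] unfolding Ad_def Bd_def by simp
    also have "\<dots> = kinner y (- (B *\<^sub>v a)) + kinner y (A *\<^sub>v b)"
      using B a y by (simp add: kinner_uminus_right)
    also have "\<dots> = kinner y (- (B *\<^sub>v a) + A *\<^sub>v b)"
      by (rule kinner_add_right[symmetric]) (use A B a b y in auto)
    also have "\<dots> = kinner y (H' *\<^sub>v x)" unfolding xab H'v[OF a b] ..
    finally show ?thesis .
  qed
  define p where "p w = V *\<^sub>v (R *\<^sub>v (H' *\<^sub>v w))" for w
  have pc: "p w \<in> carrier_vec (2*n)" for w
  proof -
    have "dim_vec (p w) = 2*n" unfolding p_def using Vc by simp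
    then show ?thesis by (rule carrier_vecI)
  qed
  have pM: "p w \<in> MAB n A B" if w: "w \<in> carrier_vec (2*n)" for w
  proof -
    have x: "R *\<^sub>v (H' *\<^sub>v w) \<in> carrier_vec n" using Rc H'c w by simp
    have "H *\<^sub>v p w = 0\<^sub>v n" unfolding p_def by (rule HV[OF x])
    then have "hblock A B *\<^sub>v p w = 0\<^sub>v n" unfolding H_def .
    then show ?thesis unfolding MAB_def using pc by blast
  qed
  have H'p: "H' *\<^sub>v p w = H' *\<^sub>v w" if w: "w \<in> carrier_vec (2*n)" for w
  proof -
    have x0: "H' *\<^sub>v w \<in> carrier_vec n" using H'c w by simp
    have x: "R *\<^sub>v (H' *\<^sub>v w) \<in> carrier_vec n" using Rc x0 by simp
    have "H' *\<^sub>v p w = G *\<^sub>v (R *\<^sub>v (H' *\<^sub>v w))" unfolding p_def by (rule H'V[OF x])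
    also have "\<dots> = H' *\<^sub>v w" by (rule GRv[OF x0])
    finally show ?thesis .
  qed
  have porth: "kinner \<mu> (w - p w) = 0" if m: "\<mu> \<in> MAB n A B" and w: "w \<in> carrier_vec (2*n)" for \<mu> w
  proof -
    obtain y where y: "y \<in> carrier_vec n" and mu: "\<mu> = V *\<^sub>v y" using MV[OF m] by blast
    have "kinner \<mu> (w - p w) = kinner y (H' *\<^sub>v (w - p w))"
      unfolding mu by (rule VH'[OF y]) (use w pc in auto)
    also have "H' *\<^sub>v (w - p w) = H' *\<^sub>v w - H' *\<^sub>v p w"
      by (rule mult_minus_distrib_mat_vec[OF H'c w pc])
    also have "\<dots> = 0\<^sub>v n" unfolding H'p[OF w] using H'c w by simp
    finally show ?thesis using kz y unfolding kinner_def by simp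
  qed
  have Pp: "P *\<^sub>v w = p w" if w: "w \<in> carrier_vec (2*n)" for w
  proof -
    have Pw: "P *\<^sub>v w \<in> MAB n A B" and Porth: "\<forall>\<mu>\<in>MAB n A B. kinner \<mu> (w - P *\<^sub>v w) = 0"
      using P w unfolding is_orth_proj_def by auto
    define d where "d = P *\<^sub>v w - p w"
    have dM: "d \<in> MAB n A B" unfolding d_def by (rule MAB_diff[OF A B Pw pM[OF w]])
    have dc: "d \<in> carrier_vec (2*n)" unfolding d_def using Pc pc w by simp
    have dd: "d = (w - p w) - (w - P *\<^sub>v w)" unfolding d_def using Pc pc[of w] w by (intro eq_vecI) auto
    have "kinner d d = kinner d (w - p w) - kinner d (w - P *\<^sub>v w)"
      by (subst (2) dd, rule kinner_diff_right) (use dc pc Pc w in auto)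
    also have "\<dots> = 0" using porth[OF dM w] Porth dM by simp
    finally have "d = 0\<^sub>v (2*n)" using kinner_self_zero[of d] dc by auto
    then show ?thesis unfolding d_def by (rule diff_zero_eq[rotated 2]) (use Pc pc w in auto)
  qed
  have Qc: "Qmat n \<in> carrier_mat (2*n) (2*n)" unfolding Qmat_def by (simp add: mult_2)
  have ABd: "A * Bd \<in> carrier_mat n n" using A Bd by simp
  have QABeq: "QAB A B = - (V * R * (A * Bd) * R * H')"
    unfolding QAB_def Let_def using R by (simp add: G_def Ad_def Bd_def V_def H'_def)
  have bigc: "V * R * (A * Bd) * R * H' \<in> carrier_mat (2*n) (2*n)"
    using Vc Rc ABd H'c by (meson mult_carrier_mat)
  show ?thesis
  proof (rule mat_eq_vecI[of _ "2*n" "2*n"])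
    show "P * Qmat n * P \<in> carrier_mat (2*n) (2*n)" using Pc Qc by (meson mult_carrier_mat)
    show "QAB A B \<in> carrier_mat (2*n) (2*n)" unfolding QABeq using bigc by simp
    fix v :: "complex vec" assume v: "v \<in> carrier_vec (2*n)"
    define y where "y = R *\<^sub>v (H' *\<^sub>v v)"
    have y: "y \<in> carrier_vec n" unfolding y_def using Rc H'c v by simp
    have ady: "Ad *\<^sub>v y \<in> carrier_vec n" and bdy: "Bd *\<^sub>v y \<in> carrier_vec n" using Ad Bd y by auto
    have Pv: "P *\<^sub>v v = V *\<^sub>v y" using Pp[OF v] unfolding p_def y_def .
    have "(P * Qmat n * P) *\<^sub>v v = P *\<^sub>v (Qmat n *\<^sub>v (P *\<^sub>v v))"
    proof -
      have "(P * Qmat n * P) *\<^sub>v v = (P * Qmat n) *\<^sub>v (P *\<^sub>v v)"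
        by (rule assoc_mult_mat_vec) (use Pc Qc v in auto)
      also have "\<dots> = P *\<^sub>v (Qmat n *\<^sub>v (P *\<^sub>v v))"
        by (rule assoc_mult_mat_vec) (use Pc Qc v in auto)
      finally show ?thesis .
    qed
    also have "Qmat n *\<^sub>v (P *\<^sub>v v) = (Ad *\<^sub>v y) @\<^sub>v 0\<^sub>v n"
      unfolding Pv Vv[OF y] by (rule Qmat_mult) (use bdy ady in auto)
    also have "P *\<^sub>v ((Ad *\<^sub>v y) @\<^sub>v 0\<^sub>v n) = V *\<^sub>v (R *\<^sub>v (H' *\<^sub>v ((Ad *\<^sub>v y) @\<^sub>v 0\<^sub>v n)))"
      using Pp[of "(Ad *\<^sub>v y) @\<^sub>v 0\<^sub>v n"] ady unfolding p_def by (simp add: mult_2)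
    also have "H' *\<^sub>v ((Ad *\<^sub>v y) @\<^sub>v 0\<^sub>v n) = - (A *\<^sub>v (Bd *\<^sub>v y))"
      using H'v[OF ady zero_carrier_vec] S[OF y] zmv[OF A] A B ady bdy by simp
    also have "V *\<^sub>v (R *\<^sub>v (- (A *\<^sub>v (Bd *\<^sub>v y)))) = - (V *\<^sub>v (R *\<^sub>v (A *\<^sub>v (Bd *\<^sub>v y))))"
      using mult_mat_vec_uminus[OF Rc, of "A *\<^sub>v (Bd *\<^sub>v y)"] mult_mat_vec_uminus[OF Vc, of "R *\<^sub>v (A *\<^sub>v (Bd *\<^sub>v y))"]
        A Rc bdy by simp
    also have "\<dots> = QAB A B *\<^sub>v v"
    proof -
      have c2: "V * R \<in> carrier_mat (2*n) n" using Vc Rc by simp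
      have c3: "V * R * (A * Bd) \<in> carrier_mat (2*n) n" using c2 ABd by simp
      have c4: "V * R * (A * Bd) * R \<in> carrier_mat (2*n) n" using c3 Rc by simp
      have "(V * R * (A * Bd) * R * H') *\<^sub>v v = (V * R * (A * Bd) * R) *\<^sub>v (H' *\<^sub>v v)"
        by (rule assoc_mult_mat_vec[OF c4 H'c v])
      also have "\<dots> = (V * R * (A * Bd)) *\<^sub>v (R *\<^sub>v (H' *\<^sub>v v))"
        by (rule assoc_mult_mat_vec[OF c3 Rc]) (use H'c v in simp)
      also have "\<dots> = (V * R) *\<^sub>v ((A * Bd) *\<^sub>v (R *\<^sub>v (H' *\<^sub>v v)))"
        by (rule assoc_mult_mat_vec[OF c2 ABd]) (use Rc H'c v in simp)
      also have "\<dots> = V *\<^sub>v (R *\<^sub>v ((A * Bd) *\<^sub>v (R *\<^sub>v (H' *\<^sub>v v))))"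
        by (rule assoc_mult_mat_vec[OF Vc Rc]) (use ABd Rc H'c v in simp)
      also have "\<dots> = V *\<^sub>v (R *\<^sub>v (A *\<^sub>v (Bd *\<^sub>v y)))" unfolding y_def using A Bd Rc H'c v by simp
      finally have e: "(V * R * (A * Bd) * R * H') *\<^sub>v v = V *\<^sub>v (R *\<^sub>v (A *\<^sub>v (Bd *\<^sub>v y)))" .
      have "(- (V * R * (A * Bd) * R * H')) *\<^sub>v v = - ((V * R * (A * Bd) * R * H') *\<^sub>v v)"
        by (rule uminus_mult_mat_vec) (use bigc v in auto)
      then show ?thesis unfolding QABeq e by simp
    qed
    finally show "(P * Qmat n * P) *\<^sub>v v = QAB A B *\<^sub>v v" .
  qed
qed

lemma edge_eq:
  fixes \<phi> \<phi>1 \<phi>2 \<psi> \<psi>1 \<psi>2 :: "nat \<Rightarrow> real \<Rightarrow> complex"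
  assumes a_pos: "\<forall>i<nI. a i > 0" and j: "j < nE + nI"
    and H1: "edge_H2 (edge_int nE a j) (\<phi> j) (\<phi>1 j) (\<phi>2 j)"
    and H2: "edge_H2 (edge_int nE a j) (\<psi> j) (\<psi>1 j) (\<psi>2 j)"
  shows "(LINT x:edge_int nE a j|lborel. cnj (\<phi> j x) * (- \<psi>2 j x))
    = (LINT x:edge_int nE a j|lborel. cnj (\<phi>1 j x) * \<psi>1 j x) + cnj (\<phi> j 0) * \<psi>1 j 0
      - (if j < nE then 0 else cnj (\<phi> j (a (j - nE))) * \<psi>1 j (a (j - nE)))"
proof (cases "j < nE")
  case True
  then show ?thesis using ext_edge[of "\<phi> j" "\<phi>1 j" "\<phi>2 j" "\<psi> j" "\<psi>1 j" "\<psi>2 j"] H1 H2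
    by (simp add: edge_int_def)
next
  case False
  then have "a (j - nE) > 0" using a_pos j by auto
  then show ?thesis using int_edge[of "a (j - nE)" "\<phi> j" "\<phi>1 j" "\<phi>2 j" "\<psi> j" "\<psi>1 j" "\<psi>2 j"] H1 H2 False
    by (simp add: edge_int_def)
qed

theorem proposition3p5:
  fixes nE nI :: nat and a :: "nat \<Rightarrow> real" and A B P :: "complex mat"
    and \<phi> \<phi>1 \<phi>2 \<psi> \<psi>1 \<psi>2 :: "nat \<Rightarrow> real \<Rightarrow> complex"
  assumes a_pos: "\<forall>i<nI. a i > 0"
    and A: "A \<in> carrier_mat (nE + 2 * nI) (nE + 2 * nI)"
    and B: "B \<in> carrier_mat (nE + 2 * nI) (nE + 2 * nI)"
    and rank: "maximal_rank (nE + 2 * nI) A B"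
    and selfadj: "A * mat_adjoint B = mat_adjoint (A * mat_adjoint B)"
    and P: "is_orth_proj (2 * (nE + 2 * nI)) (MAB (nE + 2 * nI) A B) P"
    and \<phi>: "in_dom nE nI a A B \<phi> \<phi>1 \<phi>2"
    and \<psi>: "in_dom nE nI a A B \<psi> \<psi>1 \<psi>2"
  shows "(\<Sum>j<nE + nI. LINT x:edge_int nE a j|lborel. cnj (\<phi> j x) * (- \<psi>2 j x))
           = (\<Sum>j<nE + nI. LINT x:edge_int nE a j|lborel. cnj (\<phi>1 j x) * \<psi>1 j x)
             + kinner (bvals nE nI a \<phi> \<phi>1) ((P * Qmat (nE + 2 * nI) * P) *\<^sub>v bvals nE nI a \<psi> \<psi>1)
         \<and> P * Qmat (nE + 2 * nI) * P = QAB A B"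
proof
  define n where "n = nE + 2 * nI"
  show "P * Qmat (nE + 2 * nI) * P = QAB A B"
    by (rule PQP_formula[OF A B rank selfadj P])
  define bp where "bp = bvals nE nI a \<phi> \<phi>1"
  define bq where "bq = bvals nE nI a \<psi> \<psi>1"
  have bpM: "bp \<in> MAB n A B" and bqM: "bq \<in> MAB n A B"
    using \<phi> \<psi> unfolding in_dom_def bp_def bq_def n_def by auto
  have bpc: "bp \<in> carrier_vec (2*n)" and bqc: "bq \<in> carrier_vec (2*n)"
    using bpM bqM unfolding MAB_def by auto
  have Pc: "P \<in> carrier_mat (2*n) (2*n)" using P unfolding is_orth_proj_def n_def by auto
  have Qc: "Qmat n \<in> carrier_mat (2*n) (2*n)" unfolding Qmat_def by (simp add: mult_2)
  have An: "A \<in> carrier_mat n n" and Bn: "B \<in> carrier_mat n n" using A B unfolding n_def by auto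
  have Pn: "is_orth_proj (2*n) (MAB n A B) P" using P unfolding n_def .
  have "kinner bp ((P * Qmat n * P) *\<^sub>v bq) = kinner bp (P *\<^sub>v (Qmat n *\<^sub>v (P *\<^sub>v bq)))"
  proof -
    have "(P * Qmat n * P) *\<^sub>v bq = (P * Qmat n) *\<^sub>v (P *\<^sub>v bq)"
      by (rule assoc_mult_mat_vec) (use Pc Qc bqc in auto)
    also have "\<dots> = P *\<^sub>v (Qmat n *\<^sub>v (P *\<^sub>v bq))"
      by (rule assoc_mult_mat_vec) (use Pc Qc bqc in auto)
    finally show ?thesis by simp
  qed
  also have "\<dots> = kinner bp (Qmat n *\<^sub>v (P *\<^sub>v bq))"
    by (rule proj_inner[OF Pn bpM]) (use Qc Pc bqc in simp)
  also have "P *\<^sub>v bq = bq" by (rule proj_fix[OF An Bn Pn bqM])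
  also have "kinner bp (Qmat n *\<^sub>v bq) = (\<Sum>k<n. cnj (bp $ k) * bq $ (n + k))"
  proof -
    have q: "bq = vec_first bq n @\<^sub>v vec_last bq n" using bqc by (simp add: mult_2)
    have p: "bp = vec_first bp n @\<^sub>v vec_last bp n" using bpc by (simp add: mult_2)
    have eqQ: "Qmat n *\<^sub>v bq = vec_last bq n @\<^sub>v 0\<^sub>v n"
      by (subst q, rule Qmat_mult) auto
    have "kinner bp (Qmat n *\<^sub>v bq) = kinner (vec_first bp n @\<^sub>v vec_last bp n) (vec_last bq n @\<^sub>v 0\<^sub>v n)"
      unfolding eqQ by (subst (1) p) (rule refl)
    also have "\<dots> = kinner (vec_first bp n) (vec_last bq n) + kinner (vec_last bp n) (0\<^sub>v n)"
      by (rule kinner_append) auto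
    also have "\<dots> = kinner (vec_first bp n) (vec_last bq n)" by (simp add: kinner_zero_right)
    also have "\<dots> = (\<Sum>k<n. cnj (bp $ k) * bq $ (n + k))"
      unfolding kinner_def using bpc bqc by (simp add: vec_first_def vec_last_def mult_2)
    finally show ?thesis .
  qed
  finally have K: "kinner bp ((P * Qmat n * P) *\<^sub>v bq) = (\<Sum>k<n. cnj (bp $ k) * bq $ (n + k))" .
  define c where "c i = cnj (\<phi> (nE + i) (a i)) * \<psi>1 (nE + i) (a i)" for i
  have "(\<Sum>k<n. cnj (bp $ k) * bq $ (n + k)) = (\<Sum>k<nE + nI. cnj (bp $ k) * bq $ (n + k)) + (\<Sum>i<nI. cnj (bp $ (nE + nI + i)) * bq $ (n + (nE + nI + i)))"
  proof -
    have nn: "n = (nE + nI) + nI" unfolding n_def by simp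
    show ?thesis by (subst (1) nn, rule sum_lt_add)
  qed
  also have "(\<Sum>k<nE + nI. cnj (bp $ k) * bq $ (n + k)) = (\<Sum>k<nE + nI. cnj (\<phi> k 0) * \<psi>1 k 0)"
    by (rule sum.cong) (auto simp: bp_def bq_def bvals_def n_def Let_def)
  also have "(\<Sum>i<nI. cnj (bp $ (nE + nI + i)) * bq $ (n + (nE + nI + i))) = (\<Sum>i<nI. - c i)"
    by (rule sum.cong) (auto simp: bp_def bq_def bvals_def n_def Let_def c_def)
  finally have K2: "(\<Sum>k<n. cnj (bp $ k) * bq $ (n + k)) = (\<Sum>k<nE + nI. cnj (\<phi> k 0) * \<psi>1 k 0) - (\<Sum>i<nI. c i)"
    by (simp add: sum_negf)
  have E: "(\<Sum>j<nE + nI. LINT x:edge_int nE a j|lborel. cnj (\<phi> j x) * (- \<psi>2 j x))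
     = (\<Sum>j<nE + nI. (LINT x:edge_int nE a j|lborel. cnj (\<phi>1 j x) * \<psi>1 j x) + cnj (\<phi> j 0) * \<psi>1 j 0
      - (if j < nE then 0 else cnj (\<phi> j (a (j - nE))) * \<psi>1 j (a (j - nE))))"
  proof (rule sum.cong[OF refl])
    fix j assume "j \<in> {..<nE + nI}"
    then have j: "j < nE + nI" by simp
    show "(LINT x:edge_int nE a j|lborel. cnj (\<phi> j x) * (- \<psi>2 j x))
     = (LINT x:edge_int nE a j|lborel. cnj (\<phi>1 j x) * \<psi>1 j x) + cnj (\<phi> j 0) * \<psi>1 j 0
      - (if j < nE then 0 else cnj (\<phi> j (a (j - nE))) * \<psi>1 j (a (j - nE)))"
      by (rule edge_eq[OF a_pos j]) (use \<phi> \<psi> j in \<open>auto simp: in_dom_def\<close>)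
  qed
  have F: "(\<Sum>j<nE + nI. (if j < nE then 0 else cnj (\<phi> j (a (j - nE))) * \<psi>1 j (a (j - nE)))) = (\<Sum>i<nI. c i)"
    using sum_lt_add[of "\<lambda>j. (if j < nE then 0 else cnj (\<phi> j (a (j - nE))) * \<psi>1 j (a (j - nE)))" nE nI]
    by (simp add: c_def)
  show "(\<Sum>j<nE + nI. LINT x:edge_int nE a j|lborel. cnj (\<phi> j x) * (- \<psi>2 j x))
           = (\<Sum>j<nE + nI. LINT x:edge_int nE a j|lborel. cnj (\<phi>1 j x) * \<psi>1 j x)
             + kinner (bvals nE nI a \<phi> \<phi>1) ((P * Qmat (nE + 2 * nI) * P) *\<^sub>v bvals nE nI a \<psi> \<psi>1)"
    unfolding E bp_def[symmetric] bq_def[symmetric] n_def[symmetric] K K2 F[symmetric]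
    by (simp add: sum.distrib sum_subtractf)
qed

end
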